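(* Let $R=\bigoplus_{n\ge0}R_n$ be a standard graded Noetherian ring whose base ring $(R_0,\mathfrak m_0)$ is an Artinian local ring with infinite residue field. Let $M$ be a finitely generated graded $R$-module minimally generated by homogeneous elements of degrees $d_1\ge\cdots\ge d_s$. Then for any finite set $\mathcal P=\{\mathfrak p_1,\dots,\mathfrak p_n\}$ of homogeneous prime ideals of $R$ there exists a homogeneous element $x\in M$ of degree $d_1$ such that for all $1\le i\le n$, $$\mu\big((M/Rx)_{\mathfrak p_i}\big)=\max\{0,\ \mu(M_{\mathfrak p_i})-1\}.$$
   Context: Standard graded means $R=R_0[R_1]$, i.e. $R$ is generated as an $R_0$-algebra by finitely many elements of degree $1$. $\mu(N)$ denotes the minimal number of generators of a module $N$ over the local ring $R_{\mathfrak p}$. *)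

theory Defs
  imports Main "HOL.Modules"
begin

definition decomp_ok :: "('i \<Rightarrow> 'a::ab_group_add set) \<Rightarrow> ('i \<Rightarrow> 'a) \<Rightarrow> 'a \<Rightarrow> bool" where
  "decomp_ok G f r \<longleftrightarrow> finite {i. f i \<noteq> 0} \<and> (\<forall>i. f i \<in> G i) \<and> r = sum f {i. f i \<noteq> 0}"

definition internal_dsum :: "('i \<Rightarrow> 'a::ab_group_add set) \<Rightarrow> bool" where
  "internal_dsum G \<longleftrightarrow>
     (\<forall>i. 0 \<in> G i \<and> (\<forall>a\<in>G i. \<forall>b\<in>G i. a + b \<in> G i \<and> - a \<in> G i)) \<and>
     (\<forall>r. \<exists>f. decomp_ok G f r) \<and>
     (\<forall>r f f'. decomp_ok G f r \<and> decomp_ok G f' r \<longrightarrow> f = f')"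

definition hcomp :: "('i \<Rightarrow> 'a::ab_group_add set) \<Rightarrow> 'i \<Rightarrow> 'a \<Rightarrow> 'a" where
  "hcomp G i r = (THE f. decomp_ok G f r) i"

definition graded_ring :: "(nat \<Rightarrow> 'r::comm_ring_1 set) \<Rightarrow> bool" where
  "graded_ring Rg \<longleftrightarrow> internal_dsum Rg \<and> 1 \<in> Rg 0 \<and>
     (\<forall>i j. \<forall>a\<in>Rg i. \<forall>b\<in>Rg j. a * b \<in> Rg (i + j))"

definition graded_module ::
  "('r::comm_ring_1 \<Rightarrow> 'm::ab_group_add \<Rightarrow> 'm) \<Rightarrow> (nat \<Rightarrow> 'r set) \<Rightarrow> (int \<Rightarrow> 'm set) \<Rightarrow> bool" where
  "graded_module sc Rg Mg \<longleftrightarrow> module sc \<and> internal_dsum Mg \<and>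
     (\<forall>i j. \<forall>a\<in>Rg i. \<forall>x\<in>Mg j. sc a x \<in> Mg (int i + j))"

inductive_set ring_gen :: "'r::comm_ring_1 set \<Rightarrow> 'r set" for S where
  gen: "a \<in> S \<Longrightarrow> a \<in> ring_gen S"
| zero: "0 \<in> ring_gen S"
| one: "1 \<in> ring_gen S"
| add: "a \<in> ring_gen S \<Longrightarrow> b \<in> ring_gen S \<Longrightarrow> a + b \<in> ring_gen S"
| neg: "a \<in> ring_gen S \<Longrightarrow> - a \<in> ring_gen S"
| mult: "a \<in> ring_gen S \<Longrightarrow> b \<in> ring_gen S \<Longrightarrow> a * b \<in> ring_gen S"

definition standard_graded :: "(nat \<Rightarrow> 'r::comm_ring_1 set) \<Rightarrow> bool" where
  "standard_graded Rg \<longleftrightarrow> (\<exists>G. finite G \<and> G \<subseteq> Rg 1 \<and> ring_gen (Rg 0 \<union> G) = UNIV)"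

definition is_ideal :: "'r::comm_ring_1 set \<Rightarrow> bool" where
  "is_ideal I \<longleftrightarrow> 0 \<in> I \<and> (\<forall>a\<in>I. \<forall>b\<in>I. a + b \<in> I) \<and> (\<forall>r. \<forall>a\<in>I. r * a \<in> I)"

definition noetherian_ring :: "'r::comm_ring_1 itself \<Rightarrow> bool" where
  "noetherian_ring _ \<longleftrightarrow> (\<forall>I::'r set. is_ideal I \<longrightarrow>
     (\<exists>F. finite F \<and> F \<subseteq> I \<and> I = {\<Sum>f\<in>F. c f * f | c. True}))"

definition ideal_in :: "'r::comm_ring_1 set \<Rightarrow> 'r set \<Rightarrow> bool" where
  "ideal_in A J \<longleftrightarrow> J \<subseteq> A \<and> 0 \<in> J \<and> (\<forall>a\<in>J. \<forall>b\<in>J. a + b \<in> J) \<and> (\<forall>r\<in>A. \<forall>a\<in>J. r * a \<in> J)"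

definition artinian_subring :: "'r::comm_ring_1 set \<Rightarrow> bool" where
  "artinian_subring A \<longleftrightarrow> (\<forall>f :: nat \<Rightarrow> 'r set.
     (\<forall>n. ideal_in A (f n) \<and> f (Suc n) \<subseteq> f n) \<longrightarrow> (\<exists>N. \<forall>n\<ge>N. f n = f N))"

definition local_with_max :: "'r::comm_ring_1 set \<Rightarrow> 'r set \<Rightarrow> bool" where
  "local_with_max A m0 \<longleftrightarrow> ideal_in A m0 \<and> 1 \<notin> m0 \<and>
     (\<forall>J. ideal_in A J \<and> 1 \<notin> J \<longrightarrow> J \<subseteq> m0)"

definition residue_field :: "'r::comm_ring_1 set \<Rightarrow> 'r set \<Rightarrow> 'r set set" where
  "residue_field A m0 = (\<lambda>a. {b \<in> A. a - b \<in> m0}) ` A"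

definition prime_ideal :: "'r::comm_ring_1 set \<Rightarrow> bool" where
  "prime_ideal P \<longleftrightarrow> is_ideal P \<and> 1 \<notin> P \<and> (\<forall>a b. a * b \<in> P \<longrightarrow> a \<in> P \<or> b \<in> P)"

definition homogeneous_ideal :: "(nat \<Rightarrow> 'r::comm_ring_1 set) \<Rightarrow> 'r set \<Rightarrow> bool" where
  "homogeneous_ideal Rg P \<longleftrightarrow> (\<forall>a\<in>P. \<forall>n. hcomp Rg n a \<in> P)"

text \<open>Fractions m/s with s not in p; m/s = m'/s' iff u(s'm - sm') in N for some u not in p.
  With N = {0} this is M_p; with sc = (*) and N = {0} it is the ring R_p.\<close>
definition loc_cls :: "('r::comm_ring_1 \<Rightarrow> 'm::ab_group_add \<Rightarrow> 'm) \<Rightarrow> 'm set \<Rightarrow> 'r set \<Rightarrow> 'm \<Rightarrow> 'r \<Rightarrow> ('m \<times> 'r) set" where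
  "loc_cls sc N p m s = {(m', s'). s' \<notin> p \<and> (\<exists>u. u \<notin> p \<and> sc u (sc s' m - sc s m') \<in> N)}"

definition loc_set :: "('r::comm_ring_1 \<Rightarrow> 'm::ab_group_add \<Rightarrow> 'm) \<Rightarrow> 'm set \<Rightarrow> 'r set \<Rightarrow> ('m \<times> 'r) set set" where
  "loc_set sc N p = {loc_cls sc N p m s | m s. s \<notin> p}"

definition loc_rep :: "'a set \<Rightarrow> 'a" where
  "loc_rep c = (SOME x. x \<in> c)"

definition loc_add :: "('r::comm_ring_1 \<Rightarrow> 'm::ab_group_add \<Rightarrow> 'm) \<Rightarrow> 'm set \<Rightarrow> 'r set \<Rightarrow>
    ('m \<times> 'r) set \<Rightarrow> ('m \<times> 'r) set \<Rightarrow> ('m \<times> 'r) set" where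
  "loc_add sc N p c c' = (case loc_rep c of (m, s) \<Rightarrow> case loc_rep c' of (m', s') \<Rightarrow>
      loc_cls sc N p (sc s' m + sc s m') (s * s'))"

definition loc_smul :: "('r::comm_ring_1 \<Rightarrow> 'm::ab_group_add \<Rightarrow> 'm) \<Rightarrow> 'm set \<Rightarrow> 'r set \<Rightarrow>
    ('r \<times> 'r) set \<Rightarrow> ('m \<times> 'r) set \<Rightarrow> ('m \<times> 'r) set" where
  "loc_smul sc N p a c = (case loc_rep a of (r, t) \<Rightarrow> case loc_rep c of (m, s) \<Rightarrow>
      loc_cls sc N p (sc r m) (t * s))"

inductive_set loc_span :: "('r::comm_ring_1 \<Rightarrow> 'm::ab_group_add \<Rightarrow> 'm) \<Rightarrow> 'm set \<Rightarrow> 'r set \<Rightarrow>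
    ('m \<times> 'r) set set \<Rightarrow> ('m \<times> 'r) set set" for sc N p G where
  zero: "loc_cls sc N p 0 1 \<in> loc_span sc N p G"
| gen: "c \<in> G \<Longrightarrow> c \<in> loc_span sc N p G"
| add: "c \<in> loc_span sc N p G \<Longrightarrow> c' \<in> loc_span sc N p G \<Longrightarrow> loc_add sc N p c c' \<in> loc_span sc N p G"
| smul: "a \<in> loc_set (*) {0} p \<Longrightarrow> c \<in> loc_span sc N p G \<Longrightarrow> loc_smul sc N p a c \<in> loc_span sc N p G"

definition mu_loc :: "('r::comm_ring_1 \<Rightarrow> 'm::ab_group_add \<Rightarrow> 'm) \<Rightarrow> 'm set \<Rightarrow> 'r set \<Rightarrow> nat" where
  "mu_loc sc N p = (LEAST k. \<exists>G. G \<subseteq> loc_set sc N p \<and> finite G \<and> card G = k \<and>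
      loc_span sc N p G = loc_set sc N p)"

end

theory Submission
  imports Defs
begin


locale locm = module sc for sc :: "'r::comm_ring_1 \<Rightarrow> 'm::ab_group_add \<Rightarrow> 'm" +
  fixes p :: "'r set"
  assumes pp: "prime_ideal p"
begin

lemma one_np: "1 \<notin> p" using pp unfolding prime_ideal_def by blast

lemma mult_np: "u \<notin> p \<Longrightarrow> v \<notin> p \<Longrightarrow> u * v \<notin> p"
  using pp unfolding prime_ideal_def by blast

lemma p_mult: "a \<in> p \<Longrightarrow> r * a \<in> p"
  using pp unfolding prime_ideal_def is_ideal_def by blast

lemma p_add: "a \<in> p \<Longrightarrow> b \<in> p \<Longrightarrow> a + b \<in> p"
  using pp unfolding prime_ideal_def is_ideal_def by blast

lemma p_zero: "0 \<in> p"
  using pp unfolding prime_ideal_def is_ideal_def by blast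

lemma p_neg: "a \<in> p \<Longrightarrow> - a \<in> p"
  using p_mult[of a "-1"] by simp

lemma p_diff: "a \<in> p \<Longrightarrow> b \<in> p \<Longrightarrow> a - b \<in> p"
  using p_add[of a "-b"] p_neg by simp

lemma mem_cls_W:
  assumes W: "subspace W" and NW: "N \<subseteq> W" and mem: "(n, r) \<in> loc_cls sc N p X Y"
    and Y: "Y \<notin> p" and v: "v \<notin> p" and vX: "sc v X \<in> W"
  shows "\<exists>w. w \<notin> p \<and> sc w n \<in> W"
proof -
  from mem obtain u where u: "u \<notin> p" "sc u (sc r X - sc Y n) \<in> N"
    unfolding loc_cls_def by auto
  have 1: "sc v (sc u (sc r X - sc Y n)) \<in> W" using u NW W subspace_scale by blast
  have 2: "sc (u * r) (sc v X) \<in> W" using vX W subspace_scale by blast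
  have "sc (v * u * Y) n = sc (u * r) (sc v X) - sc v (sc u (sc r X - sc Y n))"
    by (simp add: scale_right_diff_distrib mult_ac)
  also have "\<dots> \<in> W" using 1 2 W subspace_diff by blast
  finally show ?thesis using mult_np[OF mult_np[OF v u(1)] Y] by blast
qed

lemma cls_eq:
  assumes N: "subspace N" and s: "s \<notin> p" and s': "s' \<notin> p" and u: "u \<notin> p"
    and h: "sc u (sc s' m - sc s m') \<in> N"
  shows "loc_cls sc N p m s = loc_cls sc N p m' s'"
proof (intro set_eqI iffI)
  fix z assume "z \<in> loc_cls sc N p m s"
  then obtain x r v where z: "z = (x, r)" "r \<notin> p" "v \<notin> p" "sc v (sc r m - sc s x) \<in> N"
    unfolding loc_cls_def by auto
  have "sc (u * v * s) (sc r m' - sc s' x) = sc (u * s') (sc v (sc r m - sc s x)) - sc (v * r) (sc u (sc s' m - sc s m'))"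
    by (simp add: scale_right_diff_distrib mult_ac)
  also have "\<dots> \<in> N" using z h N subspace_scale subspace_diff by blast
  finally show "z \<in> loc_cls sc N p m' s'" using z mult_np[OF mult_np[OF u z(3)] s]
    unfolding loc_cls_def by blast
next
  fix z assume "z \<in> loc_cls sc N p m' s'"
  then obtain x r v where z: "z = (x, r)" "r \<notin> p" "v \<notin> p" "sc v (sc r m' - sc s' x) \<in> N"
    unfolding loc_cls_def by auto
  have "sc (u * v * s') (sc r m - sc s x) = sc (u * s) (sc v (sc r m' - sc s' x)) + sc (v * r) (sc u (sc s' m - sc s m'))"
    by (simp add: scale_right_diff_distrib mult_ac)
  also have "\<dots> \<in> N" using z h N subspace_scale subspace_add by blast
  finally show "z \<in> loc_cls sc N p m s" using z mult_np[OF mult_np[OF u z(3)] s']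
    unfolding loc_cls_def by blast
qed

lemma cls_self: "subspace N \<Longrightarrow> s \<notin> p \<Longrightarrow> (m, s) \<in> loc_cls sc N p m s"
  unfolding loc_cls_def using one_np subspace_0 by auto

lemma rep_mem: "subspace N \<Longrightarrow> c \<in> loc_set sc N p \<Longrightarrow> loc_rep c \<in> c"
  unfolding loc_set_def loc_rep_def by (auto intro: someI cls_self)

lemma rep_cls:
  assumes N: "subspace N" and s: "s \<notin> p"
  shows "loc_cls sc N p (fst (loc_rep (loc_cls sc N p m s))) (snd (loc_rep (loc_cls sc N p m s))) = loc_cls sc N p m s"
proof -
  have "loc_rep (loc_cls sc N p m s) \<in> loc_cls sc N p m s"
    using rep_mem[OF N] s unfolding loc_set_def by blast
  then obtain m' s' u where e: "loc_rep (loc_cls sc N p m s) = (m', s')" "s' \<notin> p" "u \<notin> p"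
     "sc u (sc s' m - sc s m') \<in> N" unfolding loc_cls_def by auto
  show ?thesis unfolding e(1) using cls_eq[OF N s e(2) e(3) e(4)] by simp
qed


lemma cls_snd: "(x, r) \<in> loc_cls sc' N p m s \<Longrightarrow> r \<notin> p"
  unfolding loc_cls_def by auto

lemma repR_mem: "a \<in> loc_set (*) {0} p \<Longrightarrow> loc_rep a \<in> a"
proof -
  assume "a \<in> loc_set (*) {0} p"
  then obtain r t where a: "a = loc_cls (*) {0} p r t" "t \<notin> p" unfolding loc_set_def by blast
  have "(r, t) \<in> a" unfolding a(1) loc_cls_def using a(2) one_np by auto
  then show ?thesis unfolding loc_rep_def by (rule someI)
qed

lemma loc_add_cls:
  assumes N: "subspace N" and s: "s \<notin> p" and t: "t \<notin> p"
  shows "loc_add sc N p (loc_cls sc N p a s) (loc_cls sc N p b t) = loc_cls sc N p (sc t a + sc s b) (s * t)"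
proof -
  have "loc_rep (loc_cls sc N p a s) \<in> loc_cls sc N p a s"
    using rep_mem[OF N] s unfolding loc_set_def by blast
  then obtain a' s' u where e1: "loc_rep (loc_cls sc N p a s) = (a', s')" "s' \<notin> p" "u \<notin> p"
     "sc u (sc s' a - sc s a') \<in> N" unfolding loc_cls_def by auto
  have "loc_rep (loc_cls sc N p b t) \<in> loc_cls sc N p b t"
    using rep_mem[OF N] t unfolding loc_set_def by blast
  then obtain b' t' v where e2: "loc_rep (loc_cls sc N p b t) = (b', t')" "t' \<notin> p" "v \<notin> p"
     "sc v (sc t' b - sc t b') \<in> N" unfolding loc_cls_def by auto
  have "sc (u * v) (sc (s * t) (sc t' a' + sc s' b') - sc (s' * t') (sc t a + sc s b))
     = - (sc (t * t' * v) (sc u (sc s' a - sc s a')) + sc (s * s' * u) (sc v (sc t' b - sc t b')))"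
    by (simp only: scale_right_distrib scale_right_diff_distrib scale_scale minus_add_distrib)
       (simp add: mult_ac algebra_simps)
  also have "\<dots> \<in> N" using e1 e2 N subspace_scale subspace_add subspace_neg by blast
  finally have h: "sc (u * v) (sc (s * t) (sc t' a' + sc s' b') - sc (s' * t') (sc t a + sc s b)) \<in> N" .
  show ?thesis unfolding loc_add_def e1(1) e2(1)
    using cls_eq[OF N mult_np[OF e1(2) e2(2)] mult_np[OF s t] mult_np[OF e1(3) e2(3)] h] by simp
qed

lemma loc_smul_cls:
  assumes N: "subspace N" and s: "s \<notin> p" and t: "t \<notin> p"
  shows "loc_smul sc N p (loc_cls (*) {0} p r t) (loc_cls sc N p m s) = loc_cls sc N p (sc r m) (t * s)"
proof -
  have "loc_rep (loc_cls (*) {0} p r t) \<in> loc_cls (*) {0} p r t"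
    using repR_mem t unfolding loc_set_def by blast
  then obtain r' t' u where e1: "loc_rep (loc_cls (*) {0} p r t) = (r', t')" "t' \<notin> p" "u \<notin> p"
     "u * (t' * r - t * r') = 0" unfolding loc_cls_def by auto
  have "loc_rep (loc_cls sc N p m s) \<in> loc_cls sc N p m s"
    using rep_mem[OF N] s unfolding loc_set_def by blast
  then obtain m' s' v where e2: "loc_rep (loc_cls sc N p m s) = (m', s')" "s' \<notin> p" "v \<notin> p"
     "sc v (sc s' m - sc s m') \<in> N" unfolding loc_cls_def by auto
  have ur: "u * t * r' = u * t' * r" using e1(4) by (simp add: algebra_simps)
  have "sc (u * v) (sc (t * s) (sc r' m') - sc (t' * s') (sc r m))
      = sc (v * s) (sc (u * t * r') m') - sc (u * v * t' * s' * r) m"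
    by (simp only: scale_right_distrib scale_right_diff_distrib scale_scale minus_add_distrib)
       (simp add: mult_ac algebra_simps)
  also have "\<dots> = sc (v * s) (sc (u * t' * r) m') - sc (u * v * t' * s' * r) m" by (simp only: ur)
  also have "\<dots> = - sc (u * t' * r) (sc v (sc s' m - sc s m'))"
    by (simp only: scale_right_distrib scale_right_diff_distrib scale_scale minus_add_distrib)
       (simp add: mult_ac algebra_simps)
  also have "\<dots> \<in> N" using e2 N subspace_scale subspace_neg by blast
  finally have h: "sc (u * v) (sc (t * s) (sc r' m') - sc (t' * s') (sc r m)) \<in> N" .
  show ?thesis unfolding loc_smul_def e1(1) e2(1)
    using cls_eq[OF N mult_np[OF e1(2) e2(2)] mult_np[OF t s] mult_np[OF e1(3) e2(3)] h] by simp
qed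

definition genat :: "'m set \<Rightarrow> 'm set \<Rightarrow> bool" where
  "genat N S \<longleftrightarrow> (\<forall>m. \<exists>u. u \<notin> p \<and> sc u m \<in> span (S \<union> N))"


lemma span_to_gen:
  assumes N: "subspace N" and G: "G \<subseteq> loc_set sc N p" and fG: "finite G"
    and sp: "loc_span sc N p G = loc_set sc N p"
  shows "\<exists>S. finite S \<and> card S \<le> card G \<and> genat N S"
proof -
  define pick where "pick c = (SOME z. snd z \<notin> p \<and> c = loc_cls sc N p (fst z) (snd z))" for c
  have pick: "snd (pick c) \<notin> p \<and> c = loc_cls sc N p (fst (pick c)) (snd (pick c))" if "c \<in> G" for c
  proof -
    from that G obtain m s where "s \<notin> p" "c = loc_cls sc N p m s" unfolding loc_set_def by blast
    then have "\<exists>z. snd z \<notin> p \<and> c = loc_cls sc N p (fst z) (snd z)" by (intro exI[of _ "(m, s)"]) auto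
    then show ?thesis unfolding pick_def by (rule someI_ex)
  qed
  define S where "S = (\<lambda>c. fst (pick c)) ` G"
  define W where "W = span (S \<union> N)"
  have W: "subspace W" unfolding W_def by simp
  have NW: "N \<subseteq> W" unfolding W_def using span_superset by blast
  have SW: "S \<subseteq> W" unfolding W_def using span_superset by blast
  have key: "c \<in> loc_set sc N p \<and> (\<forall>n r. (n, r) \<in> c \<longrightarrow> (\<exists>w. w \<notin> p \<and> sc w n \<in> W))"
    if "c \<in> loc_span sc N p G" for c
    using that
  proof (induction rule: loc_span.induct)
    case zero
    show ?case
    proof (intro conjI allI impI)
      show "loc_cls sc N p 0 1 \<in> loc_set sc N p" unfolding loc_set_def using one_np by blast
      fix n r assume "(n, r) \<in> loc_cls sc N p 0 1"
      from mem_cls_W[OF W NW this one_np one_np] show "\<exists>w. w \<notin> p \<and> sc w n \<in> W"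
        using subspace_0[OF W] by simp
    qed
  next
    case (gen c)
    show ?case
    proof (intro conjI allI impI)
      show "c \<in> loc_set sc N p" using gen G by blast
      fix n r assume "(n, r) \<in> c"
      then have "(n, r) \<in> loc_cls sc N p (fst (pick c)) (snd (pick c))" using pick[OF gen] by simp
      from mem_cls_W[OF W NW this _ one_np] show "\<exists>w. w \<notin> p \<and> sc w n \<in> W"
        using pick[OF gen] SW gen unfolding S_def by auto
    qed
  next
    case (add c c')
    obtain m s where ms: "loc_rep c = (m, s)" by fastforce
    obtain m' s' where ms': "loc_rep c' = (m', s')" by fastforce
    have r1: "(m, s) \<in> c" using rep_mem[OF N] add ms by metis
    have r2: "(m', s') \<in> c'" using rep_mem[OF N] add ms' by metis
    obtain v where v: "v \<notin> p" "sc v m \<in> W" using add r1 by blast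
    obtain v' where v': "v' \<notin> p" "sc v' m' \<in> W" using add r2 by blast
    have s: "s \<notin> p" using add r1 unfolding loc_set_def loc_cls_def by auto
    have s': "s' \<notin> p" using add r2 unfolding loc_set_def loc_cls_def by auto
    have eq: "loc_add sc N p c c' = loc_cls sc N p (sc s' m + sc s m') (s * s')"
      unfolding loc_add_def ms ms' by simp
    have X: "sc (v * v') (sc s' m + sc s m') \<in> W"
    proof -
      have "sc (v * v') (sc s' m + sc s m') = sc (s' * v') (sc v m) + sc (s * v) (sc v' m')"
        by (simp add: scale_right_distrib mult_ac)
      then show ?thesis using v v' W subspace_add subspace_scale by metis
    qed
    show ?case
    proof (intro conjI allI impI)
      show "loc_add sc N p c c' \<in> loc_set sc N p" unfolding eq loc_set_def using mult_np[OF s s'] by blast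
      fix n r assume "(n, r) \<in> loc_add sc N p c c'"
      from mem_cls_W[OF W NW this[unfolded eq] mult_np[OF s s'] mult_np[OF v(1) v'(1)] X]
      show "\<exists>w. w \<notin> p \<and> sc w n \<in> W" .
    qed
  next
    case (smul a c)
    obtain m s where ms: "loc_rep c = (m, s)" by fastforce
    obtain r t where rt: "loc_rep a = (r, t)" by fastforce
    have r1: "(m, s) \<in> c" using rep_mem[OF N] smul ms by metis
    have r2: "(r, t) \<in> a" using repR_mem smul rt by metis
    obtain v where v: "v \<notin> p" "sc v m \<in> W" using smul r1 by blast
    have s: "s \<notin> p" using r1 smul unfolding loc_set_def loc_cls_def by auto
    have t: "t \<notin> p" using r2 smul unfolding loc_set_def loc_cls_def by auto
    have eq: "loc_smul sc N p a c = loc_cls sc N p (sc r m) (t * s)"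
      unfolding loc_smul_def ms rt by simp
    have X: "sc v (sc r m) \<in> W"
    proof -
      have "sc v (sc r m) = sc r (sc v m)" by (simp add: mult_ac)
      then show ?thesis using v W subspace_scale by metis
    qed
    show ?case
    proof (intro conjI allI impI)
      show "loc_smul sc N p a c \<in> loc_set sc N p" unfolding eq loc_set_def using mult_np[OF t s] by blast
      fix n r' assume "(n, r') \<in> loc_smul sc N p a c"
      from mem_cls_W[OF W NW this[unfolded eq] mult_np[OF t s] v(1) X]
      show "\<exists>w. w \<notin> p \<and> sc w n \<in> W" .
    qed
  qed
  have "genat N S"
    unfolding genat_def
  proof
    fix m
    have "loc_cls sc N p m 1 \<in> loc_span sc N p G" using sp one_np unfolding loc_set_def by blast
    from key[OF this] cls_self[OF N one_np, of m] show "\<exists>u. u \<notin> p \<and> sc u m \<in> span (S \<union> N)"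
      unfolding W_def by blast
  qed
  moreover have "card S \<le> card G" unfolding S_def using fG card_image_le by blast
  moreover have "finite S" unfolding S_def using fG by blast
  ultimately show ?thesis by blast
qed

lemma gen_to_span:
  assumes N: "subspace N" and fS: "finite S" and g: "genat N S"
  shows "\<exists>G. G \<subseteq> loc_set sc N p \<and> finite G \<and> card G \<le> card S \<and> loc_span sc N p G = loc_set sc N p"
proof -
  define G where "G = (\<lambda>m. loc_cls sc N p m 1) ` S"
  have G: "G \<subseteq> loc_set sc N p" unfolding G_def loc_set_def using one_np by blast
  let ?L = "loc_span sc N p G"
  have L1: "?L \<subseteq> loc_set sc N p"
  proof
    fix c assume "c \<in> ?L"
    then show "c \<in> loc_set sc N p"
    proof (induction rule: loc_span.induct)
      case zero then show ?case unfolding loc_set_def using one_np by blast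
    next
      case (gen c) then show ?case using G by blast
    next
      case (add c c')
      obtain m s where ms: "loc_rep c = (m, s)" by fastforce
      obtain m' s' where ms': "loc_rep c' = (m', s')" by fastforce
      have s: "s \<notin> p" using rep_mem[OF N, of c] add ms unfolding loc_set_def loc_cls_def by auto
      have s': "s' \<notin> p" using rep_mem[OF N, of c'] add ms' unfolding loc_set_def loc_cls_def by auto
      show ?case unfolding loc_add_def ms ms' loc_set_def using mult_np[OF s s'] by auto
    next
      case (smul a c)
      obtain m s where ms: "loc_rep c = (m, s)" by fastforce
      obtain r t where rt: "loc_rep a = (r, t)" by fastforce
      have s: "s \<notin> p" using rep_mem[OF N, of c] smul ms unfolding loc_set_def loc_cls_def by auto
      have t: "t \<notin> p" using repR_mem[of a] smul rt unfolding loc_set_def loc_cls_def by auto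
      show ?case unfolding loc_smul_def ms rt loc_set_def using mult_np[OF t s] by auto
    qed
  qed
  have sub: "subspace {m. loc_cls sc N p m 1 \<in> ?L}"
  proof (rule subspaceI)
    show "0 \<in> {m. loc_cls sc N p m 1 \<in> ?L}" by (simp add: loc_span.zero)
  next
    fix x y assume "x \<in> {m. loc_cls sc N p m 1 \<in> ?L}" "y \<in> {m. loc_cls sc N p m 1 \<in> ?L}"
    then have "loc_add sc N p (loc_cls sc N p x 1) (loc_cls sc N p y 1) \<in> ?L"
      by (simp add: loc_span.add)
    then show "x + y \<in> {m. loc_cls sc N p m 1 \<in> ?L}"
      using loc_add_cls[OF N one_np one_np, of x y] by simp
  next
    fix c x assume "x \<in> {m. loc_cls sc N p m 1 \<in> ?L}"
    moreover have "loc_cls (*) {0} p c 1 \<in> loc_set (*) {0} p" unfolding loc_set_def using one_np by blast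
    ultimately have "loc_smul sc N p (loc_cls (*) {0} p c 1) (loc_cls sc N p x 1) \<in> ?L"
      by (simp add: loc_span.smul)
    then show "sc c x \<in> {m. loc_cls sc N p m 1 \<in> ?L}"
      using loc_smul_cls[OF N one_np one_np, of c x] by simp
  qed
  have spS: "span S \<subseteq> {m. loc_cls sc N p m 1 \<in> ?L}"
    by (rule span_minimal[OF _ sub]) (auto simp: G_def intro: loc_span.gen)
  have L2: "loc_set sc N p \<subseteq> ?L"
  proof
    fix c assume "c \<in> loc_set sc N p"
    then obtain m t where c: "c = loc_cls sc N p m t" "t \<notin> p" unfolding loc_set_def by blast
    obtain v where v: "v \<notin> p" "sc v m \<in> span (S \<union> N)" using g unfolding genat_def by blast
    then obtain y n where yn: "sc v m = y + n" "y \<in> span S" "n \<in> N"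
      using span_Un[of S N] span_eq_iff[THEN iffD2, OF N] by auto
    have "loc_cls (*) {0} p 1 (v * t) \<in> loc_set (*) {0} p" unfolding loc_set_def using mult_np[OF v(1) c(2)] by blast
    then have "loc_smul sc N p (loc_cls (*) {0} p 1 (v * t)) (loc_cls sc N p y 1) \<in> ?L"
      using spS yn by (auto intro: loc_span.smul)
    then have h: "loc_cls sc N p y (v * t) \<in> ?L"
      using loc_smul_cls[OF N one_np mult_np[OF v(1) c(2)], of 1 y] by simp
    have "sc 1 (sc t y - sc (v * t) m) = - sc t n"
    proof -
      have "sc (v * t) m = sc t (sc v m)" by (simp add: mult_ac)
      then show ?thesis using yn(1) by (simp add: scale_right_distrib)
    qed
    then have "sc 1 (sc t y - sc (v * t) m) \<in> N" using yn(3) N subspace_neg subspace_scale by metis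
    from cls_eq[OF N mult_np[OF v(1) c(2)] c(2) one_np this] h c(1)
    show "c \<in> ?L" by simp
  qed
  have "card G \<le> card S" unfolding G_def using fS card_image_le by blast
  with G L1 L2 fS show ?thesis unfolding G_def by blast
qed

lemma mu_le:
  assumes N: "subspace N" and fS: "finite S" and g: "genat N S"
  shows "mu_loc sc N p \<le> card S"
proof -
  obtain G where G: "G \<subseteq> loc_set sc N p" "finite G" "card G \<le> card S" "loc_span sc N p G = loc_set sc N p"
    using gen_to_span[OF N fS g] by blast
  have "mu_loc sc N p \<le> card G" unfolding mu_loc_def by (rule Least_le) (use G in blast)
  then show ?thesis using G by simp
qed

lemma mu_ex:
  assumes N: "subspace N" and ex: "\<exists>S. finite S \<and> genat N S"
  shows "\<exists>S. finite S \<and> genat N S \<and> card S \<le> mu_loc sc N p"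
proof -
  obtain S0 where S0: "finite S0" "genat N S0" using ex by blast
  obtain G0 where G0: "G0 \<subseteq> loc_set sc N p" "finite G0" "loc_span sc N p G0 = loc_set sc N p"
    using gen_to_span[OF N S0] by blast
  have "\<exists>G. G \<subseteq> loc_set sc N p \<and> finite G \<and> card G = mu_loc sc N p \<and> loc_span sc N p G = loc_set sc N p"
    unfolding mu_loc_def by (rule LeastI[of _ "card G0"]) (use G0 in blast)
  then obtain G where G: "G \<subseteq> loc_set sc N p" "finite G" "card G = mu_loc sc N p" "loc_span sc N p G = loc_set sc N p"
    by blast
  from span_to_gen[OF N G(1,2,4)] G(3) show ?thesis by auto
qed


definition Qp :: "'m set" where "Qp = span {sc a m | a m. a \<in> p}"

definition good :: "'m \<Rightarrow> bool" where "good x \<longleftrightarrow> \<not> (\<exists>u. u \<notin> p \<and> sc u x \<in> Qp)"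

lemma sp0: "span (S \<union> {0}) = span S"
  by (simp add: span_eq span_superset span_zero subset_eq span_base)

lemma sub1: "subspace {sc r x | r. True}"
proof (rule subspaceI)
  show "0 \<in> {sc r x | r. True}" by (rule CollectI, rule exI[of _ 0]) simp
next
  fix a b assume "a \<in> {sc r x | r. True}" "b \<in> {sc r x | r. True}"
  then obtain r r' where "a = sc r x" "b = sc r' x" by blast
  then have "a + b = sc (r + r') x" by (simp add: scale_left_distrib)
  then show "a + b \<in> {sc r x | r. True}" by blast
next
  fix c a assume "a \<in> {sc r x | r. True}"
  then obtain r where "a = sc r x" by blast
  then have "sc c a = sc (c * r) x" by simp
  then show "sc c a \<in> {sc r x | r. True}" by blast
qed

lemma sp1: "span (S \<union> {sc r x | r. True}) = span (insert x S)"
proof -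
  have a: "S \<union> {sc r x | r. True} \<subseteq> span (insert x S)"
    by (auto intro: span_base span_scale)
  have b: "insert x S \<subseteq> span (S \<union> {sc r x | r. True})"
    by (auto intro!: span_base exI[of _ 1])
  show ?thesis using a b by (simp add: span_eq)
qed

lemma genat1_iff: "genat {sc r x | r. True} S \<longleftrightarrow> genat {0} (insert x S)"
  unfolding genat_def sp0 sp1 by simp

lemma exchange:
  assumes fS: "finite S" and g: "genat {0} S" and gx: "good x"
  shows "\<exists>y\<in>S. genat {0} (insert x (S - {y}))"
proof -
  obtain u where u: "u \<notin> p" "sc u x \<in> span S" using g unfolding genat_def sp0 by blast
  then obtain a where a: "sc u x = (\<Sum>v\<in>S. sc (a v) v)" using span_finite[OF fS] by auto
  have "\<exists>y\<in>S. a y \<notin> p"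
  proof (rule ccontr)
    assume "\<not> ?thesis"
    then have "(\<Sum>v\<in>S. sc (a v) v) \<in> Qp" unfolding Qp_def by (intro span_sum) (auto intro: span_base)
    then show False using gx u a unfolding good_def by auto
  qed
  then obtain y where y: "y \<in> S" "a y \<notin> p" by blast
  define W where "W = span (insert x (S - {y}))"
  have W: "subspace W" unfolding W_def by simp
  have "sc (a y) y = sc u x - (\<Sum>v\<in>S - {y}. sc (a v) v)"
    using a sum.remove[OF fS y(1), of "\<lambda>v. sc (a v) v"] by simp
  also have "\<dots> \<in> W" unfolding W_def by (intro span_diff span_scale span_sum) (auto intro: span_base)
  finally have ay: "sc (a y) y \<in> W" .
  have sub: "subspace {z. sc (a y) z \<in> W}"
  proof (rule subspaceI)
    show "0 \<in> {z. sc (a y) z \<in> W}" using W subspace_0 by simp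
  next
    fix z z' assume "z \<in> {z. sc (a y) z \<in> W}" "z' \<in> {z. sc (a y) z \<in> W}"
    then show "z + z' \<in> {z. sc (a y) z \<in> W}" using W subspace_add by (simp add: scale_right_distrib)
  next
    fix c z assume "z \<in> {z. sc (a y) z \<in> W}"
    then show "sc c z \<in> {z. sc (a y) z \<in> W}" using W subspace_scale scale_left_commute by fastforce
  qed
  have spS: "span S \<subseteq> {z. sc (a y) z \<in> W}"
  proof (rule span_minimal[OF _ sub], safe)
    fix v assume "v \<in> S"
    show "sc (a y) v \<in> W"
    proof (cases "v = y")
      case True then show ?thesis using ay by simp
    next
      case False then have "v \<in> W" unfolding W_def using \<open>v \<in> S\<close> by (auto intro: span_base)
      then show ?thesis using W subspace_scale by blast
    qed
  qed
  have "genat {0} (insert x (S - {y}))"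
    unfolding genat_def sp0
  proof
    fix m
    obtain w where w: "w \<notin> p" "sc w m \<in> span S" using g unfolding genat_def sp0 by blast
    then have "sc (a y * w) m \<in> W" using spS by auto
    then show "\<exists>u. u \<notin> p \<and> sc u m \<in> span (insert x (S - {y}))"
      using mult_np[OF y(2) w(1)] unfolding W_def by blast
  qed
  then show ?thesis using y by blast
qed

lemma per_p:
  assumes ex: "\<exists>S. finite S \<and> genat {0} S"
    and alt: "mu_loc sc {0} p = 0 \<or> good x"
  shows "int (mu_loc sc {sc r x | r. True} p) = max 0 (int (mu_loc sc {0} p) - 1)"
proof -
  let ?N1 = "{sc r x | r. True}"
  obtain S0 where S0: "finite S0" "genat {0} S0" "card S0 \<le> mu_loc sc {0} p"
    using mu_ex[OF subspace_single_0 ex] by blast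
  have g1: "genat ?N1 S0"
  proof -
    have "span S0 \<subseteq> span (insert x S0)" by (rule span_mono) auto
    then show ?thesis using S0(2) unfolding genat_def sp0 sp1 by blast
  qed
  have le1: "mu_loc sc ?N1 p \<le> mu_loc sc {0} p" using mu_le[OF sub1 S0(1) g1] S0(3) by simp
  obtain S1 where S1: "finite S1" "genat ?N1 S1" "card S1 \<le> mu_loc sc ?N1 p"
    using mu_ex[OF sub1] S0(1) g1 by blast
  have "mu_loc sc {0} p \<le> card (insert x S1)"
    using mu_le[OF subspace_single_0 _ S1(2)[unfolded genat1_iff]] S1(1) by simp
  also have "\<dots> \<le> card S1 + 1" by (simp add: card_insert_le_m1 card_insert_if S1(1))
  finally have le2: "mu_loc sc {0} p \<le> mu_loc sc ?N1 p + 1" using S1(3) by simp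
  show ?thesis
  proof (cases "mu_loc sc {0} p = 0")
    case True then show ?thesis using le1 by simp
  next
    case False
    then have gx: "good x" using alt by (simp only: simp_thms)
    obtain y where y: "y \<in> S0" "genat {0} (insert x (S0 - {y}))" using exchange[OF S0(1,2) gx] by blast
    have "mu_loc sc ?N1 p \<le> card (S0 - {y})"
      using mu_le[OF sub1 _ y(2)[folded genat1_iff]] S0(1) by simp
    also have "\<dots> = card S0 - 1" using y(1) S0(1) by simp
    finally have "mu_loc sc ?N1 p \<le> card S0 - 1" .
    moreover have "card S0 \<ge> 1" using y(1) S0(1) by (metis card_0_eq empty_iff less_one not_le)
    ultimately show ?thesis using S0(3) le2 by linarith
  qed
qed

end



lemma dsum_uniq: "internal_dsum G \<Longrightarrow> decomp_ok G f r \<Longrightarrow> decomp_ok G f' r \<Longrightarrow> f = f'"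
  unfolding internal_dsum_def by blast

lemma dsum_ex: "internal_dsum G \<Longrightarrow> \<exists>f. decomp_ok G f r"
  unfolding internal_dsum_def by blast

lemma dsum_ex1: "internal_dsum G \<Longrightarrow> \<exists>!f. decomp_ok G f r"
  using dsum_ex dsum_uniq by blast

lemma hc_ok: "internal_dsum G \<Longrightarrow> decomp_ok G (\<lambda>i. hcomp G i r) r"
  unfolding hcomp_def using theI'[OF dsum_ex1] by auto

lemma hc_eq: "internal_dsum G \<Longrightarrow> decomp_ok G f r \<Longrightarrow> hcomp G i r = f i"
  using hc_ok[of G r] dsum_uniq[of G f r "\<lambda>i. hcomp G i r"] by simp

lemma hc_mem: "internal_dsum G \<Longrightarrow> hcomp G i r \<in> G i"
  using hc_ok unfolding decomp_ok_def by blast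

lemma hc_fin: "internal_dsum G \<Longrightarrow> finite {i. hcomp G i r \<noteq> 0}"
  using hc_ok unfolding decomp_ok_def by blast

lemma hc_sum: "internal_dsum G \<Longrightarrow> r = (\<Sum>i\<in>{i. hcomp G i r \<noteq> 0}. hcomp G i r)"
  using hc_ok unfolding decomp_ok_def by blast

lemma dsum_closed:
  assumes "internal_dsum G"
  shows "0 \<in> G i" "a \<in> G i \<Longrightarrow> b \<in> G i \<Longrightarrow> a + b \<in> G i" "a \<in> G i \<Longrightarrow> - a \<in> G i"
  using assms unfolding internal_dsum_def by blast+

lemma hc_hom:
  assumes D: "internal_dsum G" and x: "x \<in> G e"
  shows "hcomp G i x = (if i = e then x else 0)"
proof -
  have "decomp_ok G (\<lambda>i. if i = e then x else 0) x"
    unfolding decomp_ok_def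
  proof (intro conjI allI)
    show "finite {i. (if i = e then x else 0) \<noteq> 0}"
      by (rule finite_subset[of _ "{e}"]) auto
    fix i show "(if i = e then x else 0) \<in> G i" using x dsum_closed(1)[OF D] by auto
  next
    show "x = (\<Sum>i\<in>{i. (if i = e then x else 0) \<noteq> 0}. if i = e then x else 0)"
    proof (cases "x = 0")
      case True then show ?thesis by simp
    next
      case False
      then have "{i. (if i = e then x else 0) \<noteq> 0} = {e}" by auto
      then show ?thesis by simp
    qed
  qed
  from hc_eq[OF D this] show ?thesis .
qed

lemma hc_zero: "internal_dsum G \<Longrightarrow> hcomp G i 0 = 0"
  using hc_hom[of G 0 i i] dsum_closed(1)[of G i] by auto

lemma hc_add:
  assumes D: "internal_dsum G"
  shows "hcomp G i (a + b) = hcomp G i a + hcomp G i b"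
proof -
  define f where "f j = hcomp G j a" for j
  define f' where "f' j = hcomp G j b" for j
  define U where "U = {j. f j \<noteq> 0} \<union> {j. f' j \<noteq> 0}"
  have fU: "finite U" unfolding U_def f_def f'_def using hc_fin[OF D] by blast
  have sa: "a = sum f U"
  proof -
    have "a = sum f {j. f j \<noteq> 0}" using hc_sum[OF D, of a] unfolding f_def .
    also have "\<dots> = sum f U" by (rule sum.mono_neutral_left[OF fU]) (auto simp: U_def)
    finally show ?thesis .
  qed
  have sb: "b = sum f' U"
  proof -
    have "b = sum f' {j. f' j \<noteq> 0}" using hc_sum[OF D, of b] unfolding f'_def .
    also have "\<dots> = sum f' U" by (rule sum.mono_neutral_left[OF fU]) (auto simp: U_def)
    finally show ?thesis .
  qed
  have "decomp_ok G (\<lambda>j. f j + f' j) (a + b)"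
    unfolding decomp_ok_def
  proof (intro conjI allI)
    have sub: "{j. f j + f' j \<noteq> 0} \<subseteq> U" unfolding U_def by auto
    then show "finite {j. f j + f' j \<noteq> 0}" using fU finite_subset by blast
    fix j show "f j + f' j \<in> G j" unfolding f_def f'_def using hc_mem[OF D] dsum_closed(2)[OF D] by blast
  next
    have sub: "{j. f j + f' j \<noteq> 0} \<subseteq> U" unfolding U_def by auto
    have "a + b = (\<Sum>j\<in>U. f j + f' j)" using sa sb by (simp add: sum.distrib)
    also have "\<dots> = (\<Sum>j\<in>{j. f j + f' j \<noteq> 0}. f j + f' j)"
      by (rule sum.mono_neutral_right[OF fU sub]) auto
    finally show "a + b = (\<Sum>j\<in>{j. f j + f' j \<noteq> 0}. f j + f' j)" .
  qed
  from hc_eq[OF D this] show ?thesis unfolding f_def f'_def .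
qed

lemma hc_sum_gen:
  assumes D: "internal_dsum G" and K: "finite K"
  shows "hcomp G i (\<Sum>k\<in>K. h k) = (\<Sum>k\<in>K. hcomp G i (h k))"
  using K by (induction K rule: finite_induct) (simp_all add: hc_zero[OF D] hc_add[OF D])

locale grb =
  fixes Rg :: "nat \<Rightarrow> 'r::comm_ring_1 set" and m0 :: "'r set"
  assumes gr: "graded_ring Rg"
    and art: "artinian_subring (Rg 0)"
    and loc: "local_with_max (Rg 0) m0"
begin

lemma D: "internal_dsum Rg" using gr unfolding graded_ring_def by blast

lemma Rmul: "a \<in> Rg i \<Longrightarrow> b \<in> Rg j \<Longrightarrow> a * b \<in> Rg (i + j)"
  using gr unfolding graded_ring_def by blast

lemma R0: "0 \<in> Rg 0" "1 \<in> Rg 0" "a \<in> Rg 0 \<Longrightarrow> b \<in> Rg 0 \<Longrightarrow> a + b \<in> Rg 0"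
  "a \<in> Rg 0 \<Longrightarrow> - a \<in> Rg 0" "a \<in> Rg 0 \<Longrightarrow> b \<in> Rg 0 \<Longrightarrow> a * b \<in> Rg 0"
proof -
  show "0 \<in> Rg 0" by (rule dsum_closed(1)[OF D])
  show "1 \<in> Rg 0" using gr unfolding graded_ring_def by blast
  show "a \<in> Rg 0 \<Longrightarrow> b \<in> Rg 0 \<Longrightarrow> a + b \<in> Rg 0" by (rule dsum_closed(2)[OF D])
  show "a \<in> Rg 0 \<Longrightarrow> - a \<in> Rg 0" by (rule dsum_closed(3)[OF D])
  show "a \<in> Rg 0 \<Longrightarrow> b \<in> Rg 0 \<Longrightarrow> a * b \<in> Rg 0" using Rmul[of a 0 b 0] by simp
qed

lemma R0_diff: "a \<in> Rg 0 \<Longrightarrow> b \<in> Rg 0 \<Longrightarrow> a - b \<in> Rg 0"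
  using R0(3)[of a "-b"] R0(4)[of b] by simp

lemma R0_pow: "a \<in> Rg 0 \<Longrightarrow> a ^ n \<in> Rg 0"
  by (induction n) (simp_all add: R0(2) R0(5))

lemma m0: "m0 \<subseteq> Rg 0" "0 \<in> m0" "a \<in> m0 \<Longrightarrow> b \<in> m0 \<Longrightarrow> a + b \<in> m0"
  "r \<in> Rg 0 \<Longrightarrow> a \<in> m0 \<Longrightarrow> r * a \<in> m0" "1 \<notin> m0"
proof -
  have I: "ideal_in (Rg 0) m0" and o: "1 \<notin> m0" using loc unfolding local_with_max_def by auto
  show "m0 \<subseteq> Rg 0" using I unfolding ideal_in_def by auto
  show "0 \<in> m0" using I unfolding ideal_in_def by auto
  show "a \<in> m0 \<Longrightarrow> b \<in> m0 \<Longrightarrow> a + b \<in> m0" using I unfolding ideal_in_def by auto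
  show "r \<in> Rg 0 \<Longrightarrow> a \<in> m0 \<Longrightarrow> r * a \<in> m0" using I unfolding ideal_in_def by auto
  show "1 \<notin> m0" by (rule o)
qed

lemma m0_neg: "a \<in> m0 \<Longrightarrow> - a \<in> m0"
proof -
  assume a: "a \<in> m0"
  have "- 1 \<in> Rg 0" by (rule R0(4)[OF R0(2)])
  from m0(4)[OF this a] show "- a \<in> m0" by simp
qed

lemma m0_diff: "a \<in> m0 \<Longrightarrow> b \<in> m0 \<Longrightarrow> a - b \<in> m0"
  using m0(3)[of a "-b"] m0_neg[of b] by simp

lemma max_ideal: "ideal_in (Rg 0) J \<Longrightarrow> 1 \<notin> J \<Longrightarrow> J \<subseteq> m0"
  using loc unfolding local_with_max_def by blast

lemma unit:
  assumes a: "a \<in> Rg 0" "a \<notin> m0"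
  shows "\<exists>b\<in>Rg 0. b * a = 1"
proof (rule ccontr)
  assume nb: "\<not> ?thesis"
  let ?J = "{r * a | r. r \<in> Rg 0}"
  have "ideal_in (Rg 0) ?J"
    unfolding ideal_in_def
  proof (intro conjI ballI)
    show "?J \<subseteq> Rg 0" using a R0 by auto
    show "0 \<in> ?J" using R0 by (auto intro!: exI[of _ 0])
    fix x y assume "x \<in> ?J" "y \<in> ?J"
    then obtain r r' where "x = r * a" "y = r' * a" "r \<in> Rg 0" "r' \<in> Rg 0" by blast
    then show "x + y \<in> ?J" using R0(3) by (auto intro!: exI[of _ "r + r'"] simp: distrib_right)
  next
    fix r x assume "r \<in> Rg 0" "x \<in> ?J"
    then obtain r' where "x = r' * a" "r' \<in> Rg 0" by blast
    then show "r * x \<in> ?J" using R0(5) \<open>r \<in> Rg 0\<close> by (auto intro!: exI[of _ "r * r'"] simp: mult.assoc)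
  qed
  moreover have "1 \<notin> ?J" using nb by auto
  ultimately have "?J \<subseteq> m0" by (rule max_ideal)
  moreover have "a \<in> ?J" using R0 by (auto intro!: exI[of _ 1])
  ultimately show False using a by blast
qed

lemma prime_R0:
  assumes p: "prime_ideal p"
  shows "p \<inter> Rg 0 \<subseteq> m0"
proof (rule max_ideal)
  show "ideal_in (Rg 0) (p \<inter> Rg 0)"
    unfolding ideal_in_def
  proof (intro conjI ballI)
    have I: "is_ideal p" using p unfolding prime_ideal_def by blast
    show "p \<inter> Rg 0 \<subseteq> Rg 0" by blast
    show "0 \<in> p \<inter> Rg 0" using I R0(1) unfolding is_ideal_def by blast
    fix x y assume "x \<in> p \<inter> Rg 0" "y \<in> p \<inter> Rg 0"
    then show "x + y \<in> p \<inter> Rg 0" using I R0(3) unfolding is_ideal_def by blast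
  next
    have I: "is_ideal p" using p unfolding prime_ideal_def by blast
    fix r x assume "r \<in> Rg 0" "x \<in> p \<inter> Rg 0"
    then show "r * x \<in> p \<inter> Rg 0" using I R0(5) unfolding is_ideal_def by blast
  qed
  show "1 \<notin> p \<inter> Rg 0" using p unfolding prime_ideal_def by auto
qed

lemma m0_in_p:
  assumes p: "prime_ideal p"
  shows "m0 \<subseteq> p"
proof
  fix a assume am: "a \<in> m0"
  show "a \<in> p"
  proof (rule ccontr)
    assume ap: "a \<notin> p"
    have aR: "a \<in> Rg 0" using am m0 by blast
    have pid: "is_ideal p" "\<And>x y. x * y \<in> p \<Longrightarrow> x \<in> p \<or> y \<in> p"
      using p unfolding prime_ideal_def by auto
    define f where "f n = {a ^ n * b + c | b c. b \<in> Rg 0 \<and> c \<in> p \<inter> Rg 0}" for n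
    have "\<forall>n. ideal_in (Rg 0) (f n) \<and> f (Suc n) \<subseteq> f n"
    proof
      fix n
      show "ideal_in (Rg 0) (f n) \<and> f (Suc n) \<subseteq> f n"
      proof (intro conjI)
        show "ideal_in (Rg 0) (f n)"
          unfolding ideal_in_def
        proof (intro conjI ballI)
          show "f n \<subseteq> Rg 0"
          proof
            fix x assume "x \<in> f n"
            then obtain b c where "x = a ^ n * b + c" "b \<in> Rg 0" "c \<in> Rg 0" unfolding f_def by blast
            then show "x \<in> Rg 0" using R0(3)[OF R0(5)[OF R0_pow[OF aR]]] by blast
          qed
          have "(0::'r) = a ^ n * 0 + 0" by simp
          moreover have "(0::'r) \<in> p" using pid(1) unfolding is_ideal_def by blast
          ultimately show "0 \<in> f n" unfolding f_def using R0(1) by blast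
          fix x y assume "x \<in> f n" "y \<in> f n"
          then obtain b c b' c' where "x = a ^ n * b + c" "y = a ^ n * b' + c'" "b \<in> Rg 0" "b' \<in> Rg 0"
            "c \<in> p \<inter> Rg 0" "c' \<in> p \<inter> Rg 0" unfolding f_def by blast
          note h = this
          have e1: "x + y = a ^ n * (b + b') + (c + c')" using h(1,2) by (simp add: algebra_simps)
          have e2: "b + b' \<in> Rg 0" using h(3,4) by (rule R0(3))
          have e3: "c + c' \<in> p" using h(5,6) pid(1) unfolding is_ideal_def by blast
          have e4: "c + c' \<in> Rg 0" using h(5,6) R0(3) by blast
          show "x + y \<in> f n" unfolding f_def using e1 e2 e3 e4 by blast
        next
          fix r x assume "r \<in> Rg 0" "x \<in> f n"
          then obtain b c where "x = a ^ n * b + c" "b \<in> Rg 0" "c \<in> p \<inter> Rg 0" unfolding f_def by blast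
          note h = this
          have e1: "r * x = a ^ n * (r * b) + r * c" using h(1) by (simp add: algebra_simps)
          have e2: "r * b \<in> Rg 0" using \<open>r \<in> Rg 0\<close> h(2) by (rule R0(5))
          have e3: "r * c \<in> p" using h(3) pid(1) unfolding is_ideal_def by blast
          have e4: "r * c \<in> Rg 0" using \<open>r \<in> Rg 0\<close> h(3) R0(5) by blast
          show "r * x \<in> f n" unfolding f_def using e1 e2 e3 e4 by blast
        qed
        show "f (Suc n) \<subseteq> f n"
        proof
          fix x assume "x \<in> f (Suc n)"
          then obtain b c where "x = a ^ Suc n * b + c" "b \<in> Rg 0" "c \<in> p \<inter> Rg 0" unfolding f_def by blast
          note h = this
          have e1: "x = a ^ n * (a * b) + c" using h(1) by (simp add: algebra_simps)
          have e2: "a * b \<in> Rg 0" using aR h(2) by (rule R0(5))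
          show "x \<in> f n" unfolding f_def using e1 e2 h(3) by blast
        qed
      qed
    qed
    then obtain N where N: "\<forall>n\<ge>N. f n = f N" using art unfolding artinian_subring_def by blast
    have "a ^ N = a ^ N * 1 + 0" by simp
    moreover have "(0::'r) \<in> p" using pid(1) unfolding is_ideal_def by blast
    ultimately have "a ^ N \<in> f N" unfolding f_def using R0(1,2) by blast
    moreover have "f (Suc N) = f N" using N by (meson le_SucI order_refl)
    ultimately have "a ^ N \<in> f (Suc N)" by simp
    then obtain b c where bc: "a ^ N = a ^ Suc N * b + c" "b \<in> Rg 0" "c \<in> p \<inter> Rg 0"
      unfolding f_def by blast
    have e0: "a ^ N - a ^ Suc N * b = c" using arg_cong[OF bc(1), of "\<lambda>z. z - a ^ Suc N * b"] by simp
    have "a ^ N * (1 - a * b) = a ^ N - a ^ Suc N * b" by (simp add: algebra_simps)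
    then have "a ^ N * (1 - a * b) = c" using e0 by simp
    then have "a ^ N * (1 - a * b) \<in> p" using bc(3) by simp
    moreover have "a ^ N \<notin> p"
    proof (induction N)
      case 0 then show ?case using p unfolding prime_ideal_def by simp
    next
      case (Suc n) then show ?case using pid(2) ap by auto
    qed
    ultimately have "1 - a * b \<in> p" using pid(2) by blast
    moreover have "1 - a * b \<in> Rg 0" using R0_diff[OF R0(2) R0(5)[OF aR bc(2)]] .
    ultimately have "1 - a * b \<in> m0" using prime_R0[OF p] by blast
    moreover have "a * b \<in> m0" using m0(4)[OF bc(2) am] by (simp add: mult.commute)
    ultimately have "(1 - a * b) + a * b \<in> m0" using m0(3) by blast
    then show False using m0(5) by simp
  qed
qed

lemma Lam:
  assumes inf: "infinite (residue_field (Rg 0) m0)"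
  shows "\<exists>L. L \<subseteq> Rg 0 \<and> finite L \<and> card L = n \<and> (\<forall>a\<in>L. \<forall>b\<in>L. a \<noteq> b \<longrightarrow> a - b \<notin> m0)"
proof -
  define cl where "cl a = {b \<in> Rg 0. a - b \<in> m0}" for a
  obtain C where C: "C \<subseteq> residue_field (Rg 0) m0" "finite C" "card C = n"
    using infinite_arbitrarily_large[OF inf] by blast
  define f where "f c = (SOME a. a \<in> Rg 0 \<and> cl a = c)" for c
  have f: "f c \<in> Rg 0 \<and> cl (f c) = c" if "c \<in> C" for c
  proof -
    from that C(1) obtain a where "a \<in> Rg 0" "cl a = c" unfolding residue_field_def cl_def by blast
    then have "\<exists>a. a \<in> Rg 0 \<and> cl a = c" by blast
    then show ?thesis unfolding f_def by (rule someI_ex)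
  qed
  have f1: "f c \<in> Rg 0" and f2: "cl (f c) = c" if "c \<in> C" for c using f[OF that] by auto
  have inj: "inj_on f C"
  proof (rule inj_onI)
    fix c c' assume h: "c \<in> C" "c' \<in> C" "f c = f c'"
    have "c = cl (f c)" using f2[OF h(1)] by simp
    also have "\<dots> = cl (f c')" using h(3) by simp
    also have "\<dots> = c'" using f2[OF h(2)] by simp
    finally show "c = c'" .
  qed
  have cleq: "cl a = cl b" if "a - b \<in> m0" for a b
  proof -
    have e: "a - x = (a - b) + (b - x)" "b - x = (a - x) - (a - b)" for x by simp_all
    show ?thesis unfolding cl_def
    proof (intro set_eqI iffI)
      fix x assume "x \<in> {x \<in> Rg 0. a - x \<in> m0}"
      then have "x \<in> Rg 0" "(a - x) - (a - b) \<in> m0" using m0_diff[OF _ that, of "a - x"] by auto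
      then show "x \<in> {x \<in> Rg 0. b - x \<in> m0}" unfolding e(2)[of x, symmetric] by blast
    next
      fix x assume "x \<in> {x \<in> Rg 0. b - x \<in> m0}"
      then have "x \<in> Rg 0" "(a - b) + (b - x) \<in> m0" using m0(3)[OF that, of "b - x"] by auto
      then show "x \<in> {x \<in> Rg 0. a - x \<in> m0}" unfolding e(1)[of x, symmetric] by blast
    qed
  qed
  show ?thesis
  proof (intro exI[of _ "f ` C"] conjI ballI impI)
    show "f ` C \<subseteq> Rg 0" using f1 by blast
    show "finite (f ` C)" using C by simp
    show "card (f ` C) = n" using card_image[OF inj] C by simp
    fix a b assume "a \<in> f ` C" "b \<in> f ` C" "a \<noteq> b"
    then obtain c c' where h: "c \<in> C" "c' \<in> C" "a = f c" "b = f c'" by blast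
    show "a - b \<notin> m0"
    proof
      assume "a - b \<in> m0"
      then have ab: "cl a = cl b" by (rule cleq)
      have "c = cl (f c)" using f2[OF h(1)] by simp
      also have "\<dots> = cl (f c')" using ab h(3,4) by simp
      also have "\<dots> = c'" using f2[OF h(2)] by simp
      finally have "c = c'" .
      then show False using h(3,4) \<open>a \<noteq> b\<close> by simp
    qed
  qed
qed

lemma avoid:
  assumes M: "module sc"
    and V0: "0 \<in> V" and Vadd: "\<And>x y. x \<in> V \<Longrightarrow> y \<in> V \<Longrightarrow> x + y \<in> V"
    and Vsc: "\<And>a x. a \<in> Rg 0 \<Longrightarrow> x \<in> V \<Longrightarrow> sc a x \<in> V"
    and inf: "infinite (residue_field (Rg 0) m0)"
    and fF: "finite F"
    and hF: "\<forall>B\<in>F. (\<forall>x y. x \<in> B \<longrightarrow> y \<in> B \<longrightarrow> x + y \<in> B) \<and> (\<forall>a x. x \<in> B \<longrightarrow> sc a x \<in> B) \<and> (\<exists>v\<in>V. v \<notin> B)"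
  shows "\<exists>x\<in>V. \<forall>B\<in>F. x \<notin> B"
  using fF hF
proof (induction F rule: finite_induct)
  case empty then show ?case using V0 by blast
next
  case (insert B F)
  interpret module sc by (rule M)
  from insert obtain x where x: "x \<in> V" "\<forall>B'\<in>F. x \<notin> B'" by auto
  have Badd: "\<And>x y. x \<in> B \<Longrightarrow> y \<in> B \<Longrightarrow> x + y \<in> B" and Bsc: "\<And>a x. x \<in> B \<Longrightarrow> sc a x \<in> B"
    using insert.prems by auto
  show ?case
  proof (cases "x \<in> B")
    case False then show ?thesis using x by blast
  next
    case True
    have "\<exists>v\<in>V. v \<notin> B" using insert.prems by simp
    then obtain y where y: "y \<in> V" "y \<notin> B" by blast
    obtain L where L: "L \<subseteq> Rg 0" "finite L" "card L = card F + 1"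
      "\<forall>a\<in>L. \<forall>b\<in>L. a \<noteq> b \<longrightarrow> a - b \<notin> m0" using Lam[OF inf, of "card F + 1"] by (elim exE conjE) (intro that)
    define z where "z l = y + sc l x" for l
    have zV: "z l \<in> V" if "l \<in> L" for l
    proof -
      have "l \<in> Rg 0" using L(1) that by blast
      then show ?thesis unfolding z_def by (rule Vadd[OF y(1) Vsc[OF _ x(1)]])
    qed
    have zB: "z l \<notin> B" for l
    proof
      assume "z l \<in> B"
      moreover have "sc (- l) x \<in> B" using Bsc True by blast
      ultimately have "z l + sc (- l) x \<in> B" by (rule Badd)
      moreover have "z l + sc (- l) x = y" unfolding z_def by simp
      ultimately show False using y by simp
    qed
    show ?thesis
    proof (cases "\<exists>l\<in>L. \<forall>B'\<in>F. z l \<notin> B'")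
      case True
      then obtain l where "l \<in> L" "\<forall>B'\<in>F. z l \<notin> B'" by blast
      then show ?thesis using zV zB by blast
    next
      case False
      then have "\<forall>l\<in>L. \<exists>B'\<in>F. z l \<in> B'" by blast
      then obtain g where g: "\<forall>l\<in>L. g l \<in> F \<and> z l \<in> g l" by metis
      have "\<not> inj_on g L"
      proof
        assume "inj_on g L"
        moreover have "g ` L \<subseteq> F" using g by blast
        ultimately have "card L \<le> card F" using card_inj_on_le insert.hyps(1) by blast
        then show False using L(3) by simp
      qed
      then obtain l l' where ll: "l \<in> L" "l' \<in> L" "l \<noteq> l'" "g l = g l'" unfolding inj_on_def by blast
      let ?B = "g l"
      have hB: "(\<forall>x y. x \<in> ?B \<longrightarrow> y \<in> ?B \<longrightarrow> x + y \<in> ?B) \<and> (\<forall>a x. x \<in> ?B \<longrightarrow> sc a x \<in> ?B)"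
        using insert.prems g ll(1) by auto
      have "z l + sc (- 1) (z l') \<in> ?B" using hB g ll by metis
      moreover have "z l + sc (- 1) (z l') = sc (l - l') x"
      proof -
        have e1: "sc (l - l') x = sc l x - sc l' x" by (rule scale_left_diff_distrib)
        have e2: "sc (- 1) (z l') = - z l'" by simp
        show ?thesis unfolding e1 e2 z_def by (simp add: algebra_simps)
      qed
      ultimately have i: "sc (l - l') x \<in> ?B" by simp
      have "l - l' \<in> Rg 0" using L(1) ll R0_diff by blast
      moreover have "l - l' \<notin> m0" using L(4) ll by blast
      ultimately obtain b where b: "b \<in> Rg 0" "b * (l - l') = 1" using unit by blast
      have "sc b (sc (l - l') x) \<in> ?B" using hB i by blast
      moreover have "sc b (sc (l - l') x) = x"
      proof -
        have "sc b (sc (l - l') x) = sc (b * (l - l')) x" by (rule scale_scale)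
        also have "\<dots> = x" unfolding b(2) by (rule scale_one)
        finally show ?thesis .
      qed
      ultimately have "x \<in> ?B" by simp
      then show ?thesis using x g ll(1) by blast
    qed
  qed
qed

end

context locm
begin

definition QT :: "'m set \<Rightarrow> 'm set" where "QT T = {sc a t | a t. a \<in> p \<and> t \<in> T}"

lemma QT_insert_split:
  assumes z: "z \<in> span (QT (insert t T))"
  shows "\<exists>a q. a \<in> p \<and> q \<in> span (QT T) \<and> z = sc a t + q"
proof -
  let ?A = "{sc a t | a. a \<in> p}"
  have "QT (insert t T) = ?A \<union> QT T" unfolding QT_def by blast
  then obtain x q where xq: "z = x + q" "x \<in> span ?A" "q \<in> span (QT T)" using z span_Un by auto
  have subA: "subspace ?A"
  proof (rule subspaceI)
    show "0 \<in> ?A" using p_zero by (auto intro!: exI[of _ 0])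
  next
    fix x y assume "x \<in> ?A" "y \<in> ?A"
    then obtain a b where "x = sc a t" "y = sc b t" "a \<in> p" "b \<in> p" by blast
    then show "x + y \<in> ?A" using p_add by (auto simp: scale_left_distrib[symmetric])
  next
    fix c x assume "x \<in> ?A"
    then obtain a where "x = sc a t" "a \<in> p" by blast
    then show "sc c x \<in> ?A" using p_mult by auto
  qed
  have "x \<in> ?A" using xq(2) span_eq_iff[THEN iffD2, OF subA] by simp
  then obtain a where "x = sc a t" "a \<in> p" by blast
  then show ?thesis using xq by blast
qed

lemma QT_span: "QT T \<subseteq> span T"
  unfolding QT_def by (auto intro: span_scale span_base)

lemma nak:
  assumes fT: "finite T"
  shows "(\<forall>m. \<exists>u. u \<notin> p \<and> sc u m \<in> span T) \<longrightarrow> (\<forall>t\<in>T. \<exists>u. u \<notin> p \<and> sc u t \<in> span (QT T))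
          \<longrightarrow> (\<forall>m. \<exists>u. u \<notin> p \<and> sc u m = 0)"
  using fT
proof (induction T rule: finite_induct)
  case empty then show ?case by simp
next
  case (insert t T)
  show ?case
  proof (intro impI)
    assume H1: "\<forall>m. \<exists>u. u \<notin> p \<and> sc u m \<in> span (insert t T)"
      and H2: "\<forall>t'\<in>insert t T. \<exists>u. u \<notin> p \<and> sc u t' \<in> span (QT (insert t T))"
    obtain u where u: "u \<notin> p" "sc u t \<in> span (QT (insert t T))" using H2 by blast
    obtain a q where aq: "a \<in> p" "q \<in> span (QT T)" "sc u t = sc a t + q" using QT_insert_split[OF u(2)] by blast
    define w where "w = u - a"
    have w: "w \<notin> p"
    proof
      assume "w \<in> p"
      then have "w + a \<in> p" using p_add aq(1) by blast
      then show False using u(1) unfolding w_def by simp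
    qed
    have wt: "sc w t = q" unfolding w_def using aq(3) by (simp add: scale_left_diff_distrib)
    have qT: "q \<in> span T" using aq(2) QT_span span_mono span_span by blast
    have A1: "\<forall>m. \<exists>u. u \<notin> p \<and> sc u m \<in> span T"
    proof
      fix m
      obtain v where v: "v \<notin> p" "sc v m \<in> span (insert t T)" using H1 by blast
      then obtain k where k: "sc v m - sc k t \<in> span T" using span_breakdown_eq by blast
      have "sc (w * v) m = sc k (sc w t) + sc w (sc v m - sc k t)"
        by (simp add: scale_right_diff_distrib mult.commute)
      then have "sc (w * v) m = sc k q + sc w (sc v m - sc k t)" unfolding wt .
      also have "\<dots> \<in> span T" using qT k by (intro span_add span_scale)
      finally show "\<exists>u. u \<notin> p \<and> sc u m \<in> span T" using mult_np[OF w v(1)] by blast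
    qed
    have A2: "\<forall>t'\<in>T. \<exists>u. u \<notin> p \<and> sc u t' \<in> span (QT T)"
    proof
      fix t' assume "t' \<in> T"
      then obtain u' where u': "u' \<notin> p" "sc u' t' \<in> span (QT (insert t T))" using H2 by blast
      obtain a' q' where aq': "a' \<in> p" "q' \<in> span (QT T)" "sc u' t' = sc a' t + q'"
        using QT_insert_split[OF u'(2)] by blast
      have "sc (w * u') t' = sc w (sc u' t')" by simp
      also have "\<dots> = sc w (sc a' t + q')" unfolding aq'(3) ..
      also have "\<dots> = sc a' (sc w t) + sc w q'" by (simp add: scale_right_distrib mult.commute)
      also have "\<dots> = sc a' q + sc w q'" unfolding wt ..
      finally have "sc (w * u') t' = sc a' q + sc w q'" .
      also have "\<dots> \<in> span (QT T)" using aq(2) aq'(2) by (intro span_add span_scale)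
      finally show "\<exists>u. u \<notin> p \<and> sc u t' \<in> span (QT T)" using mult_np[OF w u'(1)] by blast
    qed
    show "\<forall>m. \<exists>u. u \<notin> p \<and> sc u m = 0" using insert.IH A1 A2 by blast
  qed
qed

end




context locm begin

lemma Qp_sub: "subspace Qp" unfolding Qp_def by simp

lemma Qp_gen: "a \<in> p \<Longrightarrow> sc a m \<in> Qp" unfolding Qp_def by (rule span_base) blast

lemma bad_add:
  assumes "\<exists>u. u \<notin> p \<and> sc u x \<in> Qp" "\<exists>u. u \<notin> p \<and> sc u y \<in> Qp"
  shows "\<exists>u. u \<notin> p \<and> sc u (x + y) \<in> Qp"
proof -
  obtain u v where uv: "u \<notin> p" "sc u x \<in> Qp" "v \<notin> p" "sc v y \<in> Qp" using assms by blast
  have "sc (u * v) (x + y) = sc v (sc u x) + sc u (sc v y)"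
    by (simp add: scale_right_distrib mult.commute)
  also have "\<dots> \<in> Qp" using uv Qp_sub subspace_add subspace_scale by metis
  finally show ?thesis using mult_np[OF uv(1,3)] by blast
qed

lemma bad_sc:
  assumes "\<exists>u. u \<notin> p \<and> sc u x \<in> Qp"
  shows "\<exists>u. u \<notin> p \<and> sc u (sc c x) \<in> Qp"
proof -
  obtain u where u: "u \<notin> p" "sc u x \<in> Qp" using assms by blast
  have "sc u (sc c x) = sc c (sc u x)" by (simp add: mult.commute)
  also have "\<dots> \<in> Qp" using u Qp_sub subspace_scale by blast
  finally show ?thesis using u by blast
qed

end

locale setting = grb Rg m0 for Rg :: "nat \<Rightarrow> 'r::comm_ring_1 set" and m0 +
  fixes Mg :: "int \<Rightarrow> 'm::ab_group_add set" and sc :: "'r \<Rightarrow> 'm \<Rightarrow> 'm"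
    and s :: nat and g :: "nat \<Rightarrow> 'm" and d :: "nat \<Rightarrow> int"
  assumes std: "standard_graded Rg"
    and Mgr: "graded_module sc Rg Mg"
    and g_hom: "\<forall>i<s. g i \<in> Mg (d i)"
    and g_gen: "module.span sc (g ` {..<s}) = UNIV"
    and d_dec: "\<forall>i j. i \<le> j \<and> j < s \<longrightarrow> d j \<le> d i"
    and g_min: "\<forall>k h e. (\<forall>i<k. h i \<in> Mg (e i)) \<and> module.span sc (h ` {..<k}) = UNIV \<longrightarrow> s \<le> k"
begin

lemma M: "module sc" using Mgr unfolding graded_module_def by blast
lemma DM: "internal_dsum Mg" using Mgr unfolding graded_module_def by blast
lemma Msc: "a \<in> Rg i \<Longrightarrow> x \<in> Mg j \<Longrightarrow> sc a x \<in> Mg (int i + j)"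
  using Mgr unfolding graded_module_def by blast

interpretation module sc by (rule M)

lemma ring_dec:
  assumes p: "prime_ideal p" and R1: "Rg 1 \<subseteq> p"
  shows "\<exists>r0\<in>Rg 0. r - r0 \<in> p"
proof -
  interpret L: locm sc p using M p by (unfold_locales) auto
  obtain G where G: "finite G" "G \<subseteq> Rg 1" "ring_gen (Rg 0 \<union> G) = UNIV" using std
    unfolding standard_graded_def by blast
  have "r \<in> ring_gen (Rg 0 \<union> G)" using G(3) by simp
  then show ?thesis
  proof (induction rule: ring_gen.induct)
    case (gen a)
    show ?case
    proof (cases "a \<in> Rg 0")
      case True then show ?thesis using L.p_zero by (intro bexI[of _ a]) auto
    next
      case False then have "a \<in> p" using gen G(2) R1 by blast
      then show ?thesis using R0(1) by (intro bexI[of _ 0]) auto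
    qed
  next
    case zero then show ?case using R0(1) L.p_zero by (intro bexI[of _ 0]) auto
  next
    case one then show ?case using R0(2) L.p_zero by (intro bexI[of _ 1]) auto
  next
    case (add a b)
    then obtain a0 b0 where h: "a0 \<in> Rg 0" "a - a0 \<in> p" "b0 \<in> Rg 0" "b - b0 \<in> p" by blast
    have e: "a + b - (a0 + b0) = (a - a0) + (b - b0)" by simp
    have "a + b - (a0 + b0) \<in> p" unfolding e by (rule L.p_add[OF h(2) h(4)])
    then show ?case using R0(3)[OF h(1) h(3)] by blast
  next
    case (neg a)
    then obtain a0 where h: "a0 \<in> Rg 0" "a - a0 \<in> p" by blast
    have e: "- a - (- a0) = - (a - a0)" by simp
    have "- a - (- a0) \<in> p" unfolding e by (rule L.p_neg[OF h(2)])
    then show ?case using R0(4)[OF h(1)] by blast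
  next
    case (mult a b)
    then obtain a0 b0 where h: "a0 \<in> Rg 0" "a - a0 \<in> p" "b0 \<in> Rg 0" "b - b0 \<in> p" by blast
    have e: "a * b - a0 * b0 = a * (b - b0) + b0 * (a - a0)" by (simp add: algebra_simps)
    have "a * b - a0 * b0 \<in> p" unfolding e by (rule L.p_add[OF L.p_mult[OF h(4)] L.p_mult[OF h(2)]])
    then show ?case using R0(5)[OF h(1) h(3)] by blast
  qed
qed

lemma pow_deg: "r \<in> Rg 1 \<Longrightarrow> r ^ n \<in> Rg n"
proof (induction n)
  case 0 then show ?case using R0(2) by simp
next
  case (Suc n) then show ?case using Rmul[of r 1 "r ^ n" n] by simp
qed

lemma span_idx: "span (g ` {..<s}) \<subseteq> {\<Sum>i<s. sc (c i) (g i) | c. True}"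
proof (rule span_minimal)
  show "g ` {..<s} \<subseteq> {\<Sum>i<s. sc (c i) (g i) | c. True}"
  proof
    fix x assume "x \<in> g ` {..<s}"
    then obtain j where j: "j < s" "x = g j" by blast
    define c0 :: "nat \<Rightarrow> 'r" where "c0 i = (if i = j then 1 else 0)" for i :: nat
    have "(\<Sum>i<s. sc (c0 i) (g i)) = (\<Sum>i<s. if i = j then g i else 0)"
      by (rule sum.cong) (auto simp: c0_def)
    also have "\<dots> = g j" using j(1) by simp
    finally have "x = (\<Sum>i<s. sc (c0 i) (g i))" using j(2) by simp
    then show "x \<in> {\<Sum>i<s. sc (c i) (g i) | c. True}" by blast
  qed
  show "subspace {\<Sum>i<s. sc (c i) (g i) | c. True}"
  proof (rule subspaceI)
    show "0 \<in> {\<Sum>i<s. sc (c i) (g i) | c. True}" by (intro CollectI exI[of _ "\<lambda>_. 0"]) simp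
  next
    fix x y assume "x \<in> {\<Sum>i<s. sc (c i) (g i) | c. True}" "y \<in> {\<Sum>i<s. sc (c i) (g i) | c. True}"
    then obtain c c' where "x = (\<Sum>i<s. sc (c i) (g i))" "y = (\<Sum>i<s. sc (c' i) (g i))" by blast
    then have "x + y = (\<Sum>i<s. sc (c i + c' i) (g i))" by (simp add: sum.distrib scale_left_distrib)
    then show "x + y \<in> {\<Sum>i<s. sc (c i) (g i) | c. True}" by (intro CollectI exI[of _ "\<lambda>i. c i + c' i"]) simp
  next
    fix a x assume "x \<in> {\<Sum>i<s. sc (c i) (g i) | c. True}"
    then obtain c where "x = (\<Sum>i<s. sc (c i) (g i))" by blast
    then have "sc a x = (\<Sum>i<s. sc (a * c i) (g i))" by (simp add: scale_sum_right)
    then show "sc a x \<in> {\<Sum>i<s. sc (c i) (g i) | c. True}" by (intro CollectI exI[of _ "\<lambda>i. a * c i"]) simp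
  qed
qed

lemma Qp_idx:
  assumes p: "prime_ideal p"
  shows "locm.Qp sc p \<subseteq> {\<Sum>i<s. sc (a i) (g i) | a. \<forall>i<s. a i \<in> p}"
proof -
  interpret L: locm sc p using M p by (unfold_locales) auto
  let ?E = "{\<Sum>i<s. sc (a i) (g i) | a. \<forall>i<s. a i \<in> p}"
  show ?thesis unfolding L.Qp_def
  proof (rule span_minimal)
    show "{sc a m | a m. a \<in> p} \<subseteq> ?E"
    proof
      fix z assume "z \<in> {sc a m | a m. a \<in> p}"
      then obtain a m where am: "z = sc a m" "a \<in> p" by blast
      have "m \<in> span (g ` {..<s})" using g_gen by simp
      then obtain c where "m = (\<Sum>i<s. sc (c i) (g i))" using span_idx by blast
      define c' where "c' i = a * c i" for i
      have "z = (\<Sum>i<s. sc (c' i) (g i))" using am(1) \<open>m = _\<close> by (simp add: scale_sum_right c'_def)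
      moreover have "\<forall>i<s. c' i \<in> p"
      proof (intro allI impI)
        fix i have "c i * a \<in> p" by (rule L.p_mult[OF am(2)])
        then show "c' i \<in> p" by (simp add: mult.commute c'_def)
      qed
      ultimately show "z \<in> ?E" by blast
    qed
    show "subspace ?E"
    proof (rule subspaceI)
      show "0 \<in> ?E" using L.p_zero by (intro CollectI exI[of _ "\<lambda>_. 0"]) simp
    next
      fix x y assume "x \<in> ?E" "y \<in> ?E"
      then obtain c c' where h: "x = (\<Sum>i<s. sc (c i) (g i))" "y = (\<Sum>i<s. sc (c' i) (g i))"
        "\<forall>i<s. c i \<in> p" "\<forall>i<s. c' i \<in> p" by blast
      then have "x + y = (\<Sum>i<s. sc (c i + c' i) (g i))" by (simp add: sum.distrib scale_left_distrib)
      moreover have "\<forall>i<s. c i + c' i \<in> p" using h(3,4) L.p_add by blast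
      ultimately show "x + y \<in> ?E" by (intro CollectI exI[of _ "\<lambda>i. c i + c' i"]) simp
    next
      fix a x assume "x \<in> ?E"
      then obtain c where h: "x = (\<Sum>i<s. sc (c i) (g i))" "\<forall>i<s. c i \<in> p" by blast
      then have "sc a x = (\<Sum>i<s. sc (a * c i) (g i))" by (simp add: scale_sum_right)
      moreover have "\<forall>i<s. a * c i \<in> p" using h(2) L.p_mult by blast
      ultimately show "sc a x \<in> ?E" by (intro CollectI exI[of _ "\<lambda>i. a * c i"]) simp
    qed
  qed
qed

lemma proj_scg:
  assumes i: "i < s"
  shows "hcomp Mg (d 0) (sc a (g i)) = sc (hcomp Rg (nat (d 0 - d i)) a) (g i)"
proof -
  let ?n = "nat (d 0 - d i)"
  define K where "K = {k. hcomp Rg k a \<noteq> 0}"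
  have fK: "finite K" unfolding K_def by (rule hc_fin[OF D])
  have di: "d i \<le> d 0" using d_dec i by auto
  have "sc a (g i) = sc (\<Sum>k\<in>K. hcomp Rg k a) (g i)" using hc_sum[OF D, of a] unfolding K_def by simp
  also have "\<dots> = (\<Sum>k\<in>K. sc (hcomp Rg k a) (g i))" by (rule scale_sum_left)
  finally have e: "sc a (g i) = (\<Sum>k\<in>K. sc (hcomp Rg k a) (g i))" .
  have "hcomp Mg (d 0) (sc a (g i)) = (\<Sum>k\<in>K. hcomp Mg (d 0) (sc (hcomp Rg k a) (g i)))"
    unfolding e by (rule hc_sum_gen[OF DM fK])
  also have "\<dots> = (\<Sum>k\<in>K. if k = ?n then sc (hcomp Rg k a) (g i) else 0)"
  proof (rule sum.cong[OF refl])
    fix k assume "k \<in> K"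
    have "sc (hcomp Rg k a) (g i) \<in> Mg (int k + d i)" using Msc[OF hc_mem[OF D] ] g_hom i by blast
    from hc_hom[OF DM this] have "hcomp Mg (d 0) (sc (hcomp Rg k a) (g i)) =
       (if d 0 = int k + d i then sc (hcomp Rg k a) (g i) else 0)" .
    moreover have "(d 0 = int k + d i) = (k = ?n)" using di by auto
    ultimately show "hcomp Mg (d 0) (sc (hcomp Rg k a) (g i)) = (if k = ?n then sc (hcomp Rg k a) (g i) else 0)"
      by simp
  qed
  also have "\<dots> = (if ?n \<in> K then sc (hcomp Rg ?n a) (g i) else 0)" using fK by simp
  also have "\<dots> = sc (hcomp Rg ?n a) (g i)" unfolding K_def by auto
  finally show ?thesis .
qed

lemma proper:
  assumes p: "prime_ideal p" and hom: "homogeneous_ideal Rg p"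
    and nz: "\<not> (\<forall>m. \<exists>u. u \<notin> p \<and> sc u m = 0)"
  shows "\<exists>x\<in>Mg (d 0). locm.good sc p x"
proof -
  interpret L: locm sc p using M p by (unfold_locales) auto
  have s0: "s > 0"
  proof (rule ccontr)
    assume "\<not> s > 0"
    then have "s = 0" by simp
    then have "span {} = (UNIV :: 'm set)" using g_gen by simp
    then have "\<forall>m::'m. m = 0" by (metis UNIV_I singletonD span_empty)
    then have "\<forall>m. \<exists>u. u \<notin> p \<and> sc u m = 0" using L.one_np by auto
    then show False using nz by blast
  qed
  show ?thesis
  proof (cases "Rg 1 \<subseteq> p")
    case False
    then obtain r where r: "r \<in> Rg 1" "r \<notin> p" by blast
    let ?T = "g ` {..<s}"
    have fT: "finite ?T" by simp
    have QpT: "L.Qp \<subseteq> span (L.QT ?T)"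
      unfolding L.Qp_def
    proof (rule span_minimal)
      have sub: "subspace {m. \<forall>a\<in>p. sc a m \<in> span (L.QT ?T)}"
      proof (rule subspaceI)
        show "0 \<in> {m. \<forall>a\<in>p. sc a m \<in> span (L.QT ?T)}" using span_zero by simp
      next
        fix x y assume "x \<in> {m. \<forall>a\<in>p. sc a m \<in> span (L.QT ?T)}" "y \<in> {m. \<forall>a\<in>p. sc a m \<in> span (L.QT ?T)}"
        then show "x + y \<in> {m. \<forall>a\<in>p. sc a m \<in> span (L.QT ?T)}" by (simp add: scale_right_distrib span_add)
      next
        fix c x assume h: "x \<in> {m. \<forall>a\<in>p. sc a m \<in> span (L.QT ?T)}"
        show "sc c x \<in> {m. \<forall>a\<in>p. sc a m \<in> span (L.QT ?T)}"
        proof (intro CollectI ballI)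
          fix a assume "a \<in> p"
          then have "a * c \<in> p" using L.p_mult[of a c] by (simp add: mult.commute)
          then show "sc a (sc c x) \<in> span (L.QT ?T)" using h by simp
        qed
      qed
      have "span ?T \<subseteq> {m. \<forall>a\<in>p. sc a m \<in> span (L.QT ?T)}"
      proof (rule span_minimal[OF _ sub])
        show "?T \<subseteq> {m. \<forall>a\<in>p. sc a m \<in> span (L.QT ?T)}"
          unfolding L.QT_def by (auto intro: span_base)
      qed
      then show "{sc a m | a m. a \<in> p} \<subseteq> span (L.QT ?T)" using g_gen by auto
      show "subspace (span (L.QT ?T))" by simp
    qed
    have "\<exists>j<s. L.good (g j)"
    proof (rule ccontr)
      assume "\<not> ?thesis"
      then have B: "\<forall>j<s. \<exists>u. u \<notin> p \<and> sc u (g j) \<in> L.Qp" unfolding L.good_def by blast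
      have H1: "\<forall>m. \<exists>u. u \<notin> p \<and> sc u m \<in> span ?T" using g_gen L.one_np by auto
      have H2: "\<forall>t\<in>?T. \<exists>u. u \<notin> p \<and> sc u t \<in> span (L.QT ?T)" using B QpT by blast
      have "\<forall>m. \<exists>u. u \<notin> p \<and> sc u m = 0" using L.nak[OF fT] H1 H2 by blast
      then show False using nz by blast
    qed
    then obtain j where j: "j < s" "L.good (g j)" by blast
    define n where "n = nat (d 0 - d j)"
    have dj: "d j \<le> d 0" using d_dec j(1) by auto
    have "sc (r ^ n) (g j) \<in> Mg (int n + d j)" using Msc[OF pow_deg[OF r(1)]] g_hom j(1) by blast
    moreover have "int n + d j = d 0" unfolding n_def using dj by simp
    ultimately have xM: "sc (r ^ n) (g j) \<in> Mg (d 0)" by simp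
    have rn: "r ^ k \<notin> p" for k
    proof (induction k)
      case 0 then show ?case using L.one_np by simp
    next
      case (Suc k) then show ?case using L.mult_np[OF r(2)] by simp
    qed
    have "L.good (sc (r ^ n) (g j))"
      unfolding L.good_def
    proof
      assume "\<exists>u. u \<notin> p \<and> sc u (sc (r ^ n) (g j)) \<in> L.Qp"
      then obtain u where u: "u \<notin> p" "sc (u * r ^ n) (g j) \<in> L.Qp" by auto
      then show False using j(2) L.mult_np[OF u(1) rn] unfolding L.good_def by blast
    qed
    then show ?thesis using xM by blast
  next
    case True
    have g0: "g 0 \<in> Mg (d 0)" using g_hom s0 by blast
    have "L.good (g 0)"
      unfolding L.good_def
    proof
      assume "\<exists>u. u \<notin> p \<and> sc u (g 0) \<in> L.Qp"
      then obtain u where u: "u \<notin> p" "sc u (g 0) \<in> L.Qp" by blast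
      obtain u0 where u0: "u0 \<in> Rg 0" "u - u0 \<in> p" using ring_dec[OF p True] by blast
      have u0p: "u0 \<notin> p"
      proof
        assume "u0 \<in> p"
        then have "(u - u0) + u0 \<in> p" using L.p_add u0(2) by blast
        then show False using u(1) by simp
      qed
      have "sc u0 (g 0) = sc u (g 0) - sc (u - u0) (g 0)" by (simp add: scale_left_diff_distrib)
      also have "\<dots> \<in> L.Qp" using u(2) L.Qp_gen[OF u0(2)] L.Qp_sub subspace_diff by blast
      finally have u0Q: "sc u0 (g 0) \<in> L.Qp" .
      have "u0 \<notin> m0" using u0p m0_in_p[OF p] by blast
      then obtain b where b: "b \<in> Rg 0" "b * u0 = 1" using unit u0(1) by blast
      have "sc b (sc u0 (g 0)) = g 0" using b(2) by simp
      moreover have "sc b (sc u0 (g 0)) \<in> L.Qp" using u0Q L.Qp_sub subspace_scale by blast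
      ultimately have "g 0 \<in> L.Qp" by simp
      then obtain a where a: "g 0 = (\<Sum>i<s. sc (a i) (g i))" "\<forall>i<s. a i \<in> p"
        using Qp_idx[OF p] by blast
      define c where "c i = hcomp Rg (nat (d 0 - d i)) (a i)" for i
      have "g 0 = hcomp Mg (d 0) (g 0)" using hc_hom[OF DM g0] by simp
      also have "\<dots> = hcomp Mg (d 0) (\<Sum>i<s. sc (a i) (g i))" by (rule arg_cong[OF a(1)])
      also have "\<dots> = (\<Sum>i<s. hcomp Mg (d 0) (sc (a i) (g i)))" by (rule hc_sum_gen[OF DM]) simp
      also have "\<dots> = (\<Sum>i<s. sc (c i) (g i))" unfolding c_def by (rule sum.cong[OF refl]) (simp add: proj_scg)
      finally have gs: "g 0 = (\<Sum>i<s. sc (c i) (g i))" .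
      have c0R: "c 0 \<in> Rg 0" unfolding c_def using hc_mem[OF D] by simp
      have c0p: "c 0 \<in> p" unfolding c_def using hom a(2) s0 unfolding homogeneous_ideal_def by blast
      have c0m: "c 0 \<in> m0" using prime_R0[OF p] c0R c0p by blast
      have split: "{..<s} = insert 0 {1..<s}" using s0 by auto
      have ssum: "(\<Sum>i<s. sc (c i) (g i)) = sc (c 0) (g 0) + (\<Sum>i\<in>{1..<s}. sc (c i) (g i))"
        unfolding split by (subst sum.insert) auto
      have "g 0 = sc (c 0) (g 0) + (\<Sum>i\<in>{1..<s}. sc (c i) (g i))" by (rule trans[OF gs ssum])
      then have "g 0 - sc (c 0) (g 0) = (\<Sum>i\<in>{1..<s}. sc (c i) (g i))" by (metis add_diff_cancel_left')
      note R = this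
      have "sc (1 - c 0) (g 0) = g 0 - sc (c 0) (g 0)" by (simp add: scale_left_diff_distrib)
      also have "\<dots> = (\<Sum>i\<in>{1..<s}. sc (c i) (g i))" by (rule R)
      also have "\<dots> \<in> span (g ` {1..<s})" by (intro span_sum span_scale span_base) auto
      finally have e1: "sc (1 - c 0) (g 0) \<in> span (g ` {1..<s})" .
      have "1 - c 0 \<notin> m0"
      proof
        assume "1 - c 0 \<in> m0"
        then have "(1 - c 0) + c 0 \<in> m0" using m0(3) c0m by blast
        then show False using m0(5) by simp
      qed
      moreover have "1 - c 0 \<in> Rg 0" using R0_diff[OF R0(2) c0R] .
      ultimately obtain b' where b': "b' * (1 - c 0) = 1" using unit by blast
      have "sc b' (sc (1 - c 0) (g 0)) = sc (b' * (1 - c 0)) (g 0)" by (rule scale_scale)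
      also have "\<dots> = g 0" unfolding b' by (rule scale_one)
      finally have eg: "sc b' (sc (1 - c 0) (g 0)) = g 0" .
      have "sc b' (sc (1 - c 0) (g 0)) \<in> span (g ` {1..<s})" by (rule span_scale[OF e1])
      then have g0s: "g 0 \<in> span (g ` {1..<s})" unfolding eg .
      have "g ` {..<s} \<subseteq> span (g ` {1..<s})"
      proof
        fix x assume "x \<in> g ` {..<s}"
        then obtain i where i: "i < s" "x = g i" by blast
        show "x \<in> span (g ` {1..<s})"
        proof (cases "i = 0")
          case True then show ?thesis using g0s i(2) by simp
        next
          case False
          then have "g i \<in> g ` {1..<s}" using i(1) by auto
          then show ?thesis using i(2) span_base by blast
        qed
      qed
      then have "span (g ` {..<s}) \<subseteq> span (g ` {1..<s})" using span_minimal subspace_span by blast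
      then have sp: "span (g ` {1..<s}) = UNIV" using g_gen top.extremum_uniqueI by metis
      have im: "(\<lambda>i. g (Suc i)) ` {..<s - 1} = g ` {1..<s}"
      proof -
        have "Suc ` {..<s - 1} = {1..<s}"
        proof (intro set_eqI iffI)
          fix x assume "x \<in> Suc ` {..<s - 1}" then show "x \<in> {1..<s}" by auto
        next
          fix x assume x: "x \<in> {1..<s}"
          then have "x = Suc (x - 1)" "x - 1 < s - 1" by auto
          then show "x \<in> Suc ` {..<s - 1}" by blast
        qed
        then show ?thesis by (simp add: image_image[symmetric])
      qed
      have hh: "\<forall>i<s - 1. g (Suc i) \<in> Mg (d (Suc i))" using g_hom by simp
      have "s \<le> s - 1"
        using g_min[rule_format, of "s - 1" "\<lambda>i. g (Suc i)" "\<lambda>i. d (Suc i)"] hh sp im by simp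
      then show False using s0 by simp
    qed
    then show ?thesis using g0 by blast
  qed
qed

end

theorem lemma4p2:
  fixes Rg :: "nat \<Rightarrow> 'r::comm_ring_1 set"
    and Mg :: "int \<Rightarrow> 'm::ab_group_add set"
    and sc :: "'r \<Rightarrow> 'm \<Rightarrow> 'm"
    and m0 :: "'r set"
    and s :: nat and g :: "nat \<Rightarrow> 'm" and d :: "nat \<Rightarrow> int"
    and P :: "'r set set"
  assumes R_graded: "graded_ring Rg"
    and R_std: "standard_graded Rg"
    and R_noeth: "noetherian_ring TYPE('r)"
    and R0_art: "artinian_subring (Rg 0)"
    and R0_local: "local_with_max (Rg 0) m0"
    and R0_inf: "infinite (residue_field (Rg 0) m0)"
    and M_graded: "graded_module sc Rg Mg"
    and M_fg: "\<exists>F. finite F \<and> module.span sc F = UNIV"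
    and g_hom: "\<forall>i<s. g i \<in> Mg (d i)"
    and g_gen: "module.span sc (g ` {..<s}) = UNIV"
    and d_dec: "\<forall>i j. i \<le> j \<and> j < s \<longrightarrow> d j \<le> d i"
    and g_min: "\<forall>k h e. (\<forall>i<k. h i \<in> Mg (e i)) \<and> module.span sc (h ` {..<k}) = UNIV \<longrightarrow> s \<le> k"
    and P_fin: "finite P"
    and P_hom_prime: "\<forall>p\<in>P. prime_ideal p \<and> homogeneous_ideal Rg p"
  shows "\<exists>x\<in>Mg (d 0). \<forall>p\<in>P.
           int (mu_loc sc {sc r x | r. True} p) = max 0 (int (mu_loc sc {0} p) - 1)"
proof -
  interpret S: setting Rg m0 Mg sc s g d
    using R_graded R0_art R0_local R_std M_graded g_hom g_gen d_dec g_min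
    by (unfold_locales) auto
  interpret module sc by (rule S.M)
  have L: "locm sc p" if "p \<in> P" for p
    using S.M P_hom_prime that by (unfold_locales) auto
  define bad where "bad p x \<longleftrightarrow> (\<exists>u. u \<notin> p \<and> sc u x \<in> locm.Qp sc p)" for p x
  have good_iff: "locm.good sc p x \<longleftrightarrow> \<not> bad p x" if "p \<in> P" for p x
    using locm.good_def[OF L[OF that]] unfolding bad_def by simp
  have ex: "\<exists>S. finite S \<and> locm.genat sc p {0} S" if "p \<in> P" for p
  proof -
    have "locm.genat sc p {0} (g ` {..<s})"
      unfolding locm.genat_def[OF L[OF that]] locm.sp0[OF L[OF that]]
      using g_gen locm.one_np[OF L[OF that]] by auto
    then show ?thesis by blast
  qed
  define P' where "P' = {p \<in> P. mu_loc sc {0} p \<noteq> 0}"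
  define F where "F = (\<lambda>p. {x. bad p x}) ` P'"
  have fF: "finite F" unfolding F_def P'_def using P_fin by simp
  have hF: "\<forall>B\<in>F. (\<forall>x y. x \<in> B \<longrightarrow> y \<in> B \<longrightarrow> x + y \<in> B) \<and> (\<forall>a x. x \<in> B \<longrightarrow> sc a x \<in> B)
      \<and> (\<exists>v\<in>Mg (d 0). v \<notin> B)"
  proof
    fix B assume "B \<in> F"
    then obtain p where p: "p \<in> P" "mu_loc sc {0} p \<noteq> 0" "B = {x. bad p x}" unfolding F_def P'_def by blast
    interpret Lp: locm sc p by (rule L[OF p(1)])
    have nz: "\<not> (\<forall>m. \<exists>u. u \<notin> p \<and> sc u m = 0)"
    proof
      assume "\<forall>m. \<exists>u. u \<notin> p \<and> sc u m = 0"
      then have "Lp.genat {0} {}" unfolding Lp.genat_def by (simp add: span_eq_iff[THEN iffD2, OF subspace_single_0])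
      then have "mu_loc sc {0} p \<le> card ({} :: 'm set)" by (intro Lp.mu_le) auto
      then show False using p(2) by simp
    qed
    obtain v where v: "v \<in> Mg (d 0)" "Lp.good v" using S.proper[OF _ _ nz] P_hom_prime p(1) by blast
    show "(\<forall>x y. x \<in> B \<longrightarrow> y \<in> B \<longrightarrow> x + y \<in> B) \<and> (\<forall>a x. x \<in> B \<longrightarrow> sc a x \<in> B)
      \<and> (\<exists>v\<in>Mg (d 0). v \<notin> B)"
      using Lp.bad_add Lp.bad_sc v good_iff[OF p(1)] unfolding p(3) bad_def by blast
  qed
  have V0: "0 \<in> Mg (d 0)" by (rule dsum_closed(1)[OF S.DM])
  have Vadd: "\<And>x y. x \<in> Mg (d 0) \<Longrightarrow> y \<in> Mg (d 0) \<Longrightarrow> x + y \<in> Mg (d 0)" by (rule dsum_closed(2)[OF S.DM])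
  have Vsc: "\<And>a x. a \<in> Rg 0 \<Longrightarrow> x \<in> Mg (d 0) \<Longrightarrow> sc a x \<in> Mg (d 0)"
    using S.Msc[of _ 0 _ "d 0"] by simp
  obtain x where x: "x \<in> Mg (d 0)" "\<forall>B\<in>F. x \<notin> B"
    using S.avoid[OF S.M V0 Vadd Vsc R0_inf fF hF] by blast
  show ?thesis
  proof (intro bexI[OF _ x(1)] ballI)
    fix p assume p: "p \<in> P"
    have "mu_loc sc {0} p = 0 \<or> locm.good sc p x"
    proof (cases "mu_loc sc {0} p = 0")
      case False
      then have "{x. bad p x} \<in> F" unfolding F_def P'_def using p by blast
      then have "\<not> bad p x" using x(2) by blast
      then show ?thesis using good_iff[OF p] by blast
    qed simp
    from locm.per_p[OF L[OF p] ex[OF p] this]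
    show "int (mu_loc sc {sc r x | r. True} p) = max 0 (int (mu_loc sc {0} p) - 1)" .
  qed
qed


end
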